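(* Let $\mathbb{S}=(\mathsf{S},\mu,\eta)$ be a Cartesian $k$-differential monad on a Cartesian $k$-differential category $\mathbb{X}$. Let $\mathsf{DIFF}[\mathsf{EM}(\mathbb{S})]$ be the full subcategory of $\mathsf{EM}(\mathbb{S})$ on the $\mathbb{S}$-algebras $(A,\alpha)$ with $\alpha$ $\mathsf{D}$-linear (equivalently, the differential objects of $\mathsf{EM}(\mathbb{S})$). Then $\mathsf{DIFF}[\mathsf{EM}(\mathbb{S})]$ is a Cartesian $k$-differential category, with products as in $\mathsf{EM}(\mathbb{S})$ and with the $k$-module structure on hom-sets and the differential combinator computed in $\mathbb{X}$, such that the forgetful functor $\mathsf{DIFF}[\mathsf{EM}(\mathbb{S})]\to\mathbb{X}$ is a strict Cartesian $k$-differential functor. In particular, if $\alpha$ and $\beta$ are $\mathsf{D}$-linear $\mathbb{S}$-algebra structures on $A$ and $B$, then for every $\mathbb{S}$-algebra morphism $f:(A,\alpha)\to(B,\beta)$, the derivative $\mathsf{D}[f]$ is an $\mathbb{S}$-algebra morphism $(A\times A,(\alpha\times\alpha)\circ\omega_{A,A})\to(B,\beta)$.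
   Context: Fix a commutative semiring $k$. A left $k$-linear category is a category $\mathbb{X}$ in which each hom-set $\mathbb{X}(A,B)$ is a $k$-module (scalar multiplication $r\cdot f$, addition $+$, zero $0$) such that precomposition is $k$-linear: $(r\cdot f+s\cdot g)\circ x=r\cdot(f\circ x)+s\cdot(g\circ x)$. A map $f$ is $k$-linear if $f\circ(r\cdot x+s\cdot y)=r\cdot(f\circ x)+s\cdot(f\circ y)$ for all suitable $x,y$ and $r,s\in k$. A Cartesian left $k$-linear category is a left $k$-linear category with finite products (terminal object $\ast$, projections $\pi_j:A_1\times\cdots\times A_n\to A_j$, pairing $\langle-,\dots,-\rangle$) in which all projections are $k$-linear. A Cartesian $k$-differential category is a Cartesian left $k$-linear category equipped with a differential combinator $\mathsf{D}$ assigning to each $f:A\to B$ a map $\mathsf{D}[f]:A\times A\to B$ such that: [CD.1] $\mathsf{D}[r\cdot f+s\cdot g]=r\cdot\mathsf{D}[f]+s\cdot\mathsf{D}[g]$; [CD.2] $\mathsf{D}[f]\circ\langle\pi_1,r\cdot\pi_2+s\cdot\pi_3\rangle=r\cdot(\mathsf{D}[f]\circ\langle\pi_1,\pi_2\rangle)+s\cdot(\mathsf{D}[f]\circ\langle\pi_1,\pi_3\rangle)$ (as maps $A\times A\times A\to B$); [CD.3] $\mathsf{D}[1_A]=\pi_2$ and, for $\pi_j:A_1\times\cdots\times A_n\to A_j$, $\mathsf{D}[\pi_j]=\pi_{n+j}$; [CD.4] $\mathsf{D}[\langle f_1,\dots,f_n\rangle]=\langle\mathsf{D}[f_1],\dots,\mathsf{D}[f_n]\rangle$;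 [CD.5] $\mathsf{D}[g\circ f]=\mathsf{D}[g]\circ\langle f\circ\pi_1,\mathsf{D}[f]\rangle$; [CD.6] $\mathsf{D}[\mathsf{D}[f]]\circ\langle\pi_1,0,0,\pi_2\rangle=\mathsf{D}[f]$; [CD.7] $\mathsf{D}[\mathsf{D}[f]]\circ\langle\pi_1,\pi_2,\pi_3,\pi_4\rangle=\mathsf{D}[\mathsf{D}[f]]\circ\langle\pi_1,\pi_3,\pi_2,\pi_4\rangle$ (identifying $(A\times A)\times(A\times A)$ with $A\times A\times A\times A$). A map $f$ is $\mathsf{D}$-linear if $\mathsf{D}[f]=f\circ\pi_2$. For Cartesian left $k$-linear categories $\mathbb{X},\mathbb{Y}$, a strong Cartesian $k$-linear functor is a functor $\mathsf{F}:\mathbb{X}\to\mathbb{Y}$ such that $\mathsf{F}(\ast)\to\ast$ is an isomorphism, the canonical maps $\omega_{A_1,\dots,A_n}=\langle\mathsf{F}(\pi_1),\dots,\mathsf{F}(\pi_n)\rangle:\mathsf{F}(A_1\times\cdots\times A_n)\to\mathsf{F}(A_1)\times\cdots\times\mathsf{F}(A_n)$ are isomorphisms, and $\mathsf{F}(r\cdot f+s\cdot g)=r\cdot\mathsf{F}(f)+s\cdot\mathsf{F}(g)$. It is strict if moreover $\omega$ is the identity. For Cartesian $k$-differential categories, a strong Cartesian $k$-differential functor is a strong Cartesian $k$-linear functor with $\mathsf{D}[\mathsf{F}(f)]=\mathsf{F}(\mathsf{D}[f])\circ\omega^{-1}_{A,A}$ for all $f:A\to B$; a strict Cartesian $k$-differential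 functor is a strict Cartesian $k$-linear functor with $\mathsf{D}[\mathsf{F}(f)]=\mathsf{F}(\mathsf{D}[f])$. A Cartesian $k$-differential monad on a Cartesian $k$-differential category $\mathbb{X}$ is a monad $\mathbb{S}=(\mathsf{S},\mu,\eta)$ on $\mathbb{X}$ such that $\mathsf{S}$ is a strong Cartesian $k$-differential functor and every $\eta_A$ and $\mu_A$ is $\mathsf{D}$-linear. $\mathsf{EM}(\mathbb{S})$ is the category of $\mathbb{S}$-algebras $(A,\alpha)$, $\alpha:\mathsf{S}(A)\to A$ with $\alpha\circ\mu_A=\alpha\circ\mathsf{S}(\alpha)$ and $\alpha\circ\eta_A=1_A$, and algebra morphisms $f:(A,\alpha)\to(B,\beta)$, i.e. $\beta\circ\mathsf{S}(f)=f\circ\alpha$. It has finite products $(A,\alpha)\times(B,\beta)=(A\times B,(\alpha\times\beta)\circ\omega_{A,B})$ and terminal object $(\ast,0)$. *)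

theory Defs
  imports Main
begin

text \<open>Finite products are
encoded by a terminal object and binary products (with chosen projections and
pairing); the n-ary axioms of the paper are stated for binary products.\<close>

record ('o,'a,'k) cdc =
  cObj :: "'o set"
  cArr :: "'a set"
  cdom :: "'a \<Rightarrow> 'o"
  ccod :: "'a \<Rightarrow> 'o"
  ccomp :: "'a \<Rightarrow> 'a \<Rightarrow> 'a"   \<comment> \<open>ccomp g f = g o f\<close>
  cid :: "'o \<Rightarrow> 'a"
  cadd :: "'a \<Rightarrow> 'a \<Rightarrow> 'a"
  csmult :: "'k \<Rightarrow> 'a \<Rightarrow> 'a"
  czero :: "'o \<Rightarrow> 'o \<Rightarrow> 'a"
  cterm :: "'o"
  cprod :: "'o \<Rightarrow> 'o \<Rightarrow> 'o"
  cpr1 :: "'o \<Rightarrow> 'o \<Rightarrow> 'a"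
  cpr2 :: "'o \<Rightarrow> 'o \<Rightarrow> 'a"
  cpair :: "'a \<Rightarrow> 'a \<Rightarrow> 'a"
  cD :: "'a \<Rightarrow> 'a"

definition hom :: "('o,'a,'k) cdc \<Rightarrow> 'o \<Rightarrow> 'o \<Rightarrow> 'a set" where
  "hom C A B = {f \<in> cArr C. cdom C f = A \<and> ccod C f = B}"

definition category :: "('o,'a,'k) cdc \<Rightarrow> bool" where
  "category C \<longleftrightarrow>
     (\<forall>f\<in>cArr C. cdom C f \<in> cObj C \<and> ccod C f \<in> cObj C) \<and>
     (\<forall>A\<in>cObj C. cid C A \<in> hom C A A) \<and>
     (\<forall>A B E f g. f \<in> hom C A B \<longrightarrow> g \<in> hom C B E \<longrightarrow> ccomp C g f \<in> hom C A E) \<and>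
     (\<forall>A B E G f g h. f \<in> hom C A B \<longrightarrow> g \<in> hom C B E \<longrightarrow> h \<in> hom C E G \<longrightarrow>
        ccomp C h (ccomp C g f) = ccomp C (ccomp C h g) f) \<and>
     (\<forall>A B f. f \<in> hom C A B \<longrightarrow> ccomp C f (cid C A) = f \<and> ccomp C (cid C B) f = f)"

definition left_lin_cat :: "('o,'a,'k::comm_semiring_1) cdc \<Rightarrow> bool" where
  "left_lin_cat C \<longleftrightarrow> category C \<and>
     (\<forall>A\<in>cObj C. \<forall>B\<in>cObj C. czero C A B \<in> hom C A B) \<and>
     (\<forall>A B f g. f \<in> hom C A B \<longrightarrow> g \<in> hom C A B \<longrightarrow> cadd C f g \<in> hom C A B) \<and>
     (\<forall>A B r f. f \<in> hom C A B \<longrightarrow> csmult C r f \<in> hom C A B) \<and>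
     (\<forall>A B f g h. f \<in> hom C A B \<longrightarrow> g \<in> hom C A B \<longrightarrow> h \<in> hom C A B \<longrightarrow>
        cadd C (cadd C f g) h = cadd C f (cadd C g h)) \<and>
     (\<forall>A B f g. f \<in> hom C A B \<longrightarrow> g \<in> hom C A B \<longrightarrow> cadd C f g = cadd C g f) \<and>
     (\<forall>A B f. f \<in> hom C A B \<longrightarrow> cadd C f (czero C A B) = f) \<and>
     (\<forall>A B r f g. f \<in> hom C A B \<longrightarrow> g \<in> hom C A B \<longrightarrow>
        csmult C r (cadd C f g) = cadd C (csmult C r f) (csmult C r g)) \<and>
     (\<forall>A B r s f. f \<in> hom C A B \<longrightarrow> csmult C (r + s) f = cadd C (csmult C r f) (csmult C s f)) \<and>
     (\<forall>A B r s f. f \<in> hom C A B \<longrightarrow> csmult C (r * s) f = csmult C r (csmult C s f)) \<and>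
     (\<forall>A B f. f \<in> hom C A B \<longrightarrow> csmult C 1 f = f) \<and>
     (\<forall>A B f. f \<in> hom C A B \<longrightarrow> csmult C 0 f = czero C A B) \<and>
     (\<forall>A\<in>cObj C. \<forall>B\<in>cObj C. \<forall>r. csmult C r (czero C A B) = czero C A B) \<and>
     (\<forall>Z A B x f g r s. x \<in> hom C Z A \<longrightarrow> f \<in> hom C A B \<longrightarrow> g \<in> hom C A B \<longrightarrow>
        ccomp C (cadd C (csmult C r f) (csmult C s g)) x
          = cadd C (csmult C r (ccomp C f x)) (csmult C s (ccomp C g x)))"

definition k_linear :: "('o,'a,'k) cdc \<Rightarrow> 'a \<Rightarrow> bool" where
  "k_linear C f \<longleftrightarrow> (\<forall>Z x y r s. x \<in> hom C Z (cdom C f) \<longrightarrow> y \<in> hom C Z (cdom C f) \<longrightarrow>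
     ccomp C f (cadd C (csmult C r x) (csmult C s y))
       = cadd C (csmult C r (ccomp C f x)) (csmult C s (ccomp C f y)))"

definition cart_lin_cat :: "('o,'a,'k::comm_semiring_1) cdc \<Rightarrow> bool" where
  "cart_lin_cat C \<longleftrightarrow> left_lin_cat C \<and>
     cterm C \<in> cObj C \<and>
     (\<forall>A\<in>cObj C. \<exists>!t. t \<in> hom C A (cterm C)) \<and>
     (\<forall>A\<in>cObj C. \<forall>B\<in>cObj C. cprod C A B \<in> cObj C \<and>
        cpr1 C A B \<in> hom C (cprod C A B) A \<and> cpr2 C A B \<in> hom C (cprod C A B) B \<and>
        k_linear C (cpr1 C A B) \<and> k_linear C (cpr2 C A B)) \<and>
     (\<forall>Z A B f g. f \<in> hom C Z A \<longrightarrow> g \<in> hom C Z B \<longrightarrow>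
        cpair C f g \<in> hom C Z (cprod C A B) \<and>
        ccomp C (cpr1 C A B) (cpair C f g) = f \<and> ccomp C (cpr2 C A B) (cpair C f g) = g) \<and>
     (\<forall>Z A B h. h \<in> hom C Z (cprod C A B) \<longrightarrow>
        cpair C (ccomp C (cpr1 C A B) h) (ccomp C (cpr2 C A B) h) = h)"

definition cart_diff_cat :: "('o,'a,'k::comm_semiring_1) cdc \<Rightarrow> bool" where
  "cart_diff_cat C \<longleftrightarrow> cart_lin_cat C \<and>
     (\<forall>A B f. f \<in> hom C A B \<longrightarrow> cD C f \<in> hom C (cprod C A A) B) \<and>
     (\<forall>A B f g r s. f \<in> hom C A B \<longrightarrow> g \<in> hom C A B \<longrightarrow>
        cD C (cadd C (csmult C r f) (csmult C s g)) = cadd C (csmult C r (cD C f)) (csmult C s (cD C g))) \<and>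
     (\<forall>A B f r s. f \<in> hom C A B \<longrightarrow>
        (let q1 = cpr1 C A (cprod C A A);
             q2 = ccomp C (cpr1 C A A) (cpr2 C A (cprod C A A));
             q3 = ccomp C (cpr2 C A A) (cpr2 C A (cprod C A A))
         in ccomp C (cD C f) (cpair C q1 (cadd C (csmult C r q2) (csmult C s q3)))
            = cadd C (csmult C r (ccomp C (cD C f) (cpair C q1 q2)))
                     (csmult C s (ccomp C (cD C f) (cpair C q1 q3))))) \<and>
     (\<forall>A\<in>cObj C. cD C (cid C A) = cpr2 C A A) \<and>
     (\<forall>A\<in>cObj C. \<forall>B\<in>cObj C.
        cD C (cpr1 C A B) = ccomp C (cpr1 C A B) (cpr2 C (cprod C A B) (cprod C A B)) \<and>
        cD C (cpr2 C A B) = ccomp C (cpr2 C A B) (cpr2 C (cprod C A B) (cprod C A B))) \<and>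
     (\<forall>Z A B f g. f \<in> hom C Z A \<longrightarrow> g \<in> hom C Z B \<longrightarrow>
        cD C (cpair C f g) = cpair C (cD C f) (cD C g)) \<and>
     (\<forall>A B E f g. f \<in> hom C A B \<longrightarrow> g \<in> hom C B E \<longrightarrow>
        cD C (ccomp C g f) = ccomp C (cD C g) (cpair C (ccomp C f (cpr1 C A A)) (cD C f))) \<and>
     (\<forall>A B f. f \<in> hom C A B \<longrightarrow>
        ccomp C (cD C (cD C f))
          (cpair C (cpair C (cpr1 C A A) (czero C (cprod C A A) A))
                   (cpair C (czero C (cprod C A A) A) (cpr2 C A A))) = cD C f) \<and>
     (\<forall>A B f. f \<in> hom C A B \<longrightarrow>
        (let AA = cprod C A A;
             p1 = ccomp C (cpr1 C A A) (cpr1 C AA AA);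
             p2 = ccomp C (cpr2 C A A) (cpr1 C AA AA);
             p3 = ccomp C (cpr1 C A A) (cpr2 C AA AA);
             p4 = ccomp C (cpr2 C A A) (cpr2 C AA AA)
         in ccomp C (cD C (cD C f)) (cpair C (cpair C p1 p2) (cpair C p3 p4))
            = ccomp C (cD C (cD C f)) (cpair C (cpair C p1 p3) (cpair C p2 p4))))"

definition D_linear :: "('o,'a,'k) cdc \<Rightarrow> 'a \<Rightarrow> bool" where
  "D_linear C f \<longleftrightarrow> cD C f = ccomp C f (cpr2 C (cdom C f) (cdom C f))"

definition cfunctor :: "('o,'a,'k) cdc \<Rightarrow> ('p,'b,'k) cdc \<Rightarrow> ('o \<Rightarrow> 'p) \<Rightarrow> ('a \<Rightarrow> 'b) \<Rightarrow> bool" where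
  "cfunctor C C' Fo Fa \<longleftrightarrow>
     (\<forall>A\<in>cObj C. Fo A \<in> cObj C') \<and>
     (\<forall>A B f. f \<in> hom C A B \<longrightarrow> Fa f \<in> hom C' (Fo A) (Fo B)) \<and>
     (\<forall>A\<in>cObj C. Fa (cid C A) = cid C' (Fo A)) \<and>
     (\<forall>A B E f g. f \<in> hom C A B \<longrightarrow> g \<in> hom C B E \<longrightarrow> Fa (ccomp C g f) = ccomp C' (Fa g) (Fa f))"

definition iso :: "('o,'a,'k) cdc \<Rightarrow> 'a \<Rightarrow> bool" where
  "iso C f \<longleftrightarrow> f \<in> cArr C \<and> (\<exists>g \<in> hom C (ccod C f) (cdom C f).
      ccomp C g f = cid C (cdom C f) \<and> ccomp C f g = cid C (ccod C f))"

definition inv_arr :: "('o,'a,'k) cdc \<Rightarrow> 'a \<Rightarrow> 'a" where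
  "inv_arr C f = (SOME g. g \<in> hom C (ccod C f) (cdom C f) \<and>
      ccomp C g f = cid C (cdom C f) \<and> ccomp C f g = cid C (ccod C f))"

definition omega :: "('o,'a,'k) cdc \<Rightarrow> ('p,'b,'k) cdc \<Rightarrow> ('o \<Rightarrow> 'p) \<Rightarrow> ('a \<Rightarrow> 'b) \<Rightarrow> 'o \<Rightarrow> 'o \<Rightarrow> 'b" where
  "omega C C' Fo Fa A B = cpair C' (Fa (cpr1 C A B)) (Fa (cpr2 C A B))"

definition strong_cart_lin_functor ::
  "('o,'a,'k) cdc \<Rightarrow> ('p,'b,'k) cdc \<Rightarrow> ('o \<Rightarrow> 'p) \<Rightarrow> ('a \<Rightarrow> 'b) \<Rightarrow> bool" where
  "strong_cart_lin_functor C C' Fo Fa \<longleftrightarrow> cfunctor C C' Fo Fa \<and>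
     (\<forall>t. t \<in> hom C' (Fo (cterm C)) (cterm C') \<longrightarrow> iso C' t) \<and>
     (\<forall>A\<in>cObj C. \<forall>B\<in>cObj C. iso C' (omega C C' Fo Fa A B)) \<and>
     (\<forall>A B f g r s. f \<in> hom C A B \<longrightarrow> g \<in> hom C A B \<longrightarrow>
        Fa (cadd C (csmult C r f) (csmult C s g)) = cadd C' (csmult C' r (Fa f)) (csmult C' s (Fa g)))"

definition strict_cart_lin_functor ::
  "('o,'a,'k) cdc \<Rightarrow> ('p,'b,'k) cdc \<Rightarrow> ('o \<Rightarrow> 'p) \<Rightarrow> ('a \<Rightarrow> 'b) \<Rightarrow> bool" where
  "strict_cart_lin_functor C C' Fo Fa \<longleftrightarrow> strong_cart_lin_functor C C' Fo Fa \<and>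
     Fo (cterm C) = cterm C' \<and>
     (\<forall>A\<in>cObj C. \<forall>B\<in>cObj C. omega C C' Fo Fa A B = cid C' (Fo (cprod C A B)))"

definition strong_cart_diff_functor ::
  "('o,'a,'k) cdc \<Rightarrow> ('p,'b,'k) cdc \<Rightarrow> ('o \<Rightarrow> 'p) \<Rightarrow> ('a \<Rightarrow> 'b) \<Rightarrow> bool" where
  "strong_cart_diff_functor C C' Fo Fa \<longleftrightarrow> strong_cart_lin_functor C C' Fo Fa \<and>
     (\<forall>A B f. f \<in> hom C A B \<longrightarrow>
        cD C' (Fa f) = ccomp C' (Fa (cD C f)) (inv_arr C' (omega C C' Fo Fa A A)))"

definition strict_cart_diff_functor ::
  "('o,'a,'k) cdc \<Rightarrow> ('p,'b,'k) cdc \<Rightarrow> ('o \<Rightarrow> 'p) \<Rightarrow> ('a \<Rightarrow> 'b) \<Rightarrow> bool" where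
  "strict_cart_diff_functor C C' Fo Fa \<longleftrightarrow> strict_cart_lin_functor C C' Fo Fa \<and>
     (\<forall>A B f. f \<in> hom C A B \<longrightarrow> cD C' (Fa f) = Fa (cD C f))"

definition monad :: "('o,'a,'k) cdc \<Rightarrow> ('o \<Rightarrow> 'o) \<Rightarrow> ('a \<Rightarrow> 'a) \<Rightarrow> ('o \<Rightarrow> 'a) \<Rightarrow> ('o \<Rightarrow> 'a) \<Rightarrow> bool" where
  "monad X So Sa mu eta \<longleftrightarrow> cfunctor X X So Sa \<and>
     (\<forall>A\<in>cObj X. eta A \<in> hom X A (So A) \<and> mu A \<in> hom X (So (So A)) (So A)) \<and>
     (\<forall>A B f. f \<in> hom X A B \<longrightarrow>
        ccomp X (Sa f) (eta A) = ccomp X (eta B) f \<and>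
        ccomp X (Sa f) (mu A) = ccomp X (mu B) (Sa (Sa f))) \<and>
     (\<forall>A\<in>cObj X. ccomp X (mu A) (Sa (mu A)) = ccomp X (mu A) (mu (So A)) \<and>
        ccomp X (mu A) (eta (So A)) = cid X (So A) \<and>
        ccomp X (mu A) (Sa (eta A)) = cid X (So A))"

definition cart_diff_monad ::
  "('o,'a,'k::comm_semiring_1) cdc \<Rightarrow> ('o \<Rightarrow> 'o) \<Rightarrow> ('a \<Rightarrow> 'a) \<Rightarrow> ('o \<Rightarrow> 'a) \<Rightarrow> ('o \<Rightarrow> 'a) \<Rightarrow> bool" where
  "cart_diff_monad X So Sa mu eta \<longleftrightarrow> monad X So Sa mu eta \<and>
     strong_cart_diff_functor X X So Sa \<and>
     (\<forall>A\<in>cObj X. D_linear X (eta A) \<and> D_linear X (mu A))"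

definition is_alg :: "('o,'a,'k) cdc \<Rightarrow> ('o \<Rightarrow> 'o) \<Rightarrow> ('a \<Rightarrow> 'a) \<Rightarrow> ('o \<Rightarrow> 'a) \<Rightarrow> ('o \<Rightarrow> 'a)
    \<Rightarrow> 'o \<Rightarrow> 'a \<Rightarrow> bool" where
  "is_alg X So Sa mu eta A \<alpha> \<longleftrightarrow> A \<in> cObj X \<and> \<alpha> \<in> hom X (So A) A \<and>
     ccomp X \<alpha> (mu A) = ccomp X \<alpha> (Sa \<alpha>) \<and> ccomp X \<alpha> (eta A) = cid X A"

definition alg_mor :: "('o,'a,'k) cdc \<Rightarrow> ('a \<Rightarrow> 'a) \<Rightarrow> 'o \<Rightarrow> 'a \<Rightarrow> 'o \<Rightarrow> 'a \<Rightarrow> 'a \<Rightarrow> bool" where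
  "alg_mor X Sa A \<alpha> B \<beta> f \<longleftrightarrow> f \<in> hom X A B \<and> ccomp X \<beta> (Sa f) = ccomp X f \<alpha>"

definition alg_prod :: "('o,'a,'k) cdc \<Rightarrow> ('o \<Rightarrow> 'o) \<Rightarrow> ('a \<Rightarrow> 'a) \<Rightarrow> 'o \<Rightarrow> 'a \<Rightarrow> 'o \<Rightarrow> 'a \<Rightarrow> 'a" where
  "alg_prod X So Sa A \<alpha> B \<beta> =
     ccomp X (cpair X (ccomp X \<alpha> (cpr1 X (So A) (So B))) (ccomp X \<beta> (cpr2 X (So A) (So B))))
             (omega X X So Sa A B)"

definition DIFF_obj :: "('o,'a,'k) cdc \<Rightarrow> ('o \<Rightarrow> 'o) \<Rightarrow> ('a \<Rightarrow> 'a) \<Rightarrow> ('o \<Rightarrow> 'a) \<Rightarrow> ('o \<Rightarrow> 'a)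
    \<Rightarrow> ('o \<times> 'a) set" where
  "DIFF_obj X So Sa mu eta = {(A, \<alpha>). is_alg X So Sa mu eta A \<alpha> \<and> D_linear X \<alpha>}"

definition DIFF_prod :: "('o,'a,'k) cdc \<Rightarrow> ('o \<Rightarrow> 'o) \<Rightarrow> ('a \<Rightarrow> 'a) \<Rightarrow> 'o \<times> 'a \<Rightarrow> 'o \<times> 'a \<Rightarrow> 'o \<times> 'a" where
  "DIFF_prod X So Sa P Q = (cprod X (fst P) (fst Q), alg_prod X So Sa (fst P) (snd P) (fst Q) (snd Q))"

text \<open>The full subcategory DIFF[EM(S)] of EM(S) on the D-linear algebras; an arrow is a
triple (source algebra, target algebra, underlying map in X).\<close>
definition DIFF_EM :: "('o,'a,'k) cdc \<Rightarrow> ('o \<Rightarrow> 'o) \<Rightarrow> ('a \<Rightarrow> 'a) \<Rightarrow> ('o \<Rightarrow> 'a) \<Rightarrow> ('o \<Rightarrow> 'a)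
    \<Rightarrow> ('o \<times> 'a, ('o \<times> 'a) \<times> ('o \<times> 'a) \<times> 'a, 'k) cdc" where
  "DIFF_EM X So Sa mu eta =
    \<lparr> cObj = DIFF_obj X So Sa mu eta,
      cArr = {(P, Q, f). P \<in> DIFF_obj X So Sa mu eta \<and> Q \<in> DIFF_obj X So Sa mu eta \<and>
                alg_mor X Sa (fst P) (snd P) (fst Q) (snd Q) f},
      cdom = (\<lambda>(P, Q, f). P),
      ccod = (\<lambda>(P, Q, f). Q),
      ccomp = (\<lambda>(Q, R, g) (P, Q', f). (P, R, ccomp X g f)),
      cid = (\<lambda>P. (P, P, cid X (fst P))),
      cadd = (\<lambda>(P, Q, f) (P', Q', g). (P, Q, cadd X f g)),
      csmult = (\<lambda>r (P, Q, f). (P, Q, csmult X r f)),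
      czero = (\<lambda>P Q. (P, Q, czero X (fst P) (fst Q))),
      cterm = (cterm X, czero X (So (cterm X)) (cterm X)),
      cprod = DIFF_prod X So Sa,
      cpr1 = (\<lambda>P Q. (DIFF_prod X So Sa P Q, P, cpr1 X (fst P) (fst Q))),
      cpr2 = (\<lambda>P Q. (DIFF_prod X So Sa P Q, Q, cpr2 X (fst P) (fst Q))),
      cpair = (\<lambda>(P, Q, f) (P', Q', g). (P, DIFF_prod X So Sa Q Q', cpair X f g)),
      cD = (\<lambda>(P, Q, f). (DIFF_prod X So Sa P P, Q, cD X f)) \<rparr>"

definition forget_arr :: "('o \<times> 'a) \<times> ('o \<times> 'a) \<times> 'a \<Rightarrow> 'a" where
  "forget_arr = (\<lambda>(P, Q, f). f)"

end

theory Submission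
  imports Defs
begin

context
  fixes X :: "('o,'a,'k::comm_semiring_1) cdc"
  assumes cdc: "cart_diff_cat X"
begin

lemmas cdcd = cdc[unfolded cart_diff_cat_def]
lemma cl: "cart_lin_cat X" using cdcd[THEN conjunct1] by blast
lemmas cld = cl[unfolded cart_lin_cat_def]
lemma ll: "left_lin_cat X" using cld[THEN conjunct1] by blast
lemmas lld = ll[unfolded left_lin_cat_def]
lemma cat: "category X" using lld[THEN conjunct1] by blast
lemmas catd = cat[unfolded category_def]

lemma dom_obj: "f \<in> hom X A B \<Longrightarrow> A \<in> cObj X"
  using catd[THEN conjunct1] unfolding hom_def by auto
lemma cod_obj: "f \<in> hom X A B \<Longrightarrow> B \<in> cObj X"
  using catd[THEN conjunct1] unfolding hom_def by auto
lemma comp_hom[intro]: "f \<in> hom X A B \<Longrightarrow> g \<in> hom X B E \<Longrightarrow> ccomp X g f \<in> hom X A E"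
  using catd[THEN conjunct2, THEN conjunct2, THEN conjunct1] by blast
lemma assoc: "f \<in> hom X A B \<Longrightarrow> g \<in> hom X B E \<Longrightarrow> h \<in> hom X E G \<Longrightarrow>
   ccomp X h (ccomp X g f) = ccomp X (ccomp X h g) f"
  using catd[THEN conjunct2, THEN conjunct2, THEN conjunct2, THEN conjunct1] by blast
lemma id_hom[intro]: "A \<in> cObj X \<Longrightarrow> cid X A \<in> hom X A A"
  using catd[THEN conjunct2, THEN conjunct1] by blast
lemma id_r: "f \<in> hom X A B \<Longrightarrow> ccomp X f (cid X A) = f"
  using catd[THEN conjunct2, THEN conjunct2, THEN conjunct2, THEN conjunct2] by blast
lemma id_l: "f \<in> hom X A B \<Longrightarrow> ccomp X (cid X B) f = f"
  using catd[THEN conjunct2, THEN conjunct2, THEN conjunct2, THEN conjunct2] by blast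

lemma zero_hom[intro]: "A \<in> cObj X \<Longrightarrow> B \<in> cObj X \<Longrightarrow> czero X A B \<in> hom X A B"
  using lld[THEN conjunct2, THEN conjunct1] by blast
lemma add_hom[intro]: "f \<in> hom X A B \<Longrightarrow> g \<in> hom X A B \<Longrightarrow> cadd X f g \<in> hom X A B"
  using lld[THEN conjunct2, THEN conjunct2, THEN conjunct1] by blast
lemma smult_hom[intro]: "f \<in> hom X A B \<Longrightarrow> csmult X r f \<in> hom X A B"
  using lld[THEN conjunct2, THEN conjunct2, THEN conjunct2, THEN conjunct1] by blast
lemma add_assoc: "f \<in> hom X A B \<Longrightarrow> g \<in> hom X A B \<Longrightarrow> h \<in> hom X A B \<Longrightarrow>
        cadd X (cadd X f g) h = cadd X f (cadd X g h)"
  using lld[THEN conjunct2, THEN conjunct2, THEN conjunct2, THEN conjunct2, THEN conjunct1] by blast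
lemma add_comm: "f \<in> hom X A B \<Longrightarrow> g \<in> hom X A B \<Longrightarrow> cadd X f g = cadd X g f"
  using lld[THEN conjunct2, THEN conjunct2, THEN conjunct2, THEN conjunct2, THEN conjunct2, THEN conjunct1] by blast
lemma add_zero: "f \<in> hom X A B \<Longrightarrow> cadd X f (czero X A B) = f"
  using lld[THEN conjunct2, THEN conjunct2, THEN conjunct2, THEN conjunct2, THEN conjunct2, THEN conjunct2, THEN conjunct1] by blast
lemma smult_add: "f \<in> hom X A B \<Longrightarrow> g \<in> hom X A B \<Longrightarrow>
        csmult X r (cadd X f g) = cadd X (csmult X r f) (csmult X r g)"
  using lld[THEN conjunct2, THEN conjunct2, THEN conjunct2, THEN conjunct2, THEN conjunct2, THEN conjunct2, THEN conjunct2, THEN conjunct1] by blast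
lemma add_smult: "f \<in> hom X A B \<Longrightarrow> csmult X (r + s) f = cadd X (csmult X r f) (csmult X s f)"
  using lld[THEN conjunct2, THEN conjunct2, THEN conjunct2, THEN conjunct2, THEN conjunct2, THEN conjunct2, THEN conjunct2, THEN conjunct2, THEN conjunct1] by blast
lemma mult_smult: "f \<in> hom X A B \<Longrightarrow> csmult X (r * s) f = csmult X r (csmult X s f)"
  using lld[THEN conjunct2, THEN conjunct2, THEN conjunct2, THEN conjunct2, THEN conjunct2, THEN conjunct2, THEN conjunct2, THEN conjunct2, THEN conjunct2, THEN conjunct1] by blast
lemma one_smult: "f \<in> hom X A B \<Longrightarrow> csmult X 1 f = f"
  using lld[THEN conjunct2, THEN conjunct2, THEN conjunct2, THEN conjunct2, THEN conjunct2, THEN conjunct2, THEN conjunct2, THEN conjunct2, THEN conjunct2, THEN conjunct2, THEN conjunct1] by blast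
lemma zero_smult: "f \<in> hom X A B \<Longrightarrow> csmult X 0 f = czero X A B"
  using lld[THEN conjunct2, THEN conjunct2, THEN conjunct2, THEN conjunct2, THEN conjunct2, THEN conjunct2, THEN conjunct2, THEN conjunct2, THEN conjunct2, THEN conjunct2, THEN conjunct2, THEN conjunct1] by blast
lemma smult_zero: "A \<in> cObj X \<Longrightarrow> B \<in> cObj X \<Longrightarrow> csmult X r (czero X A B) = czero X A B"
  using lld[THEN conjunct2, THEN conjunct2, THEN conjunct2, THEN conjunct2, THEN conjunct2, THEN conjunct2, THEN conjunct2, THEN conjunct2, THEN conjunct2, THEN conjunct2, THEN conjunct2, THEN conjunct2, THEN conjunct1] by blast
lemma precomp_lin: "x \<in> hom X Z A \<Longrightarrow> f \<in> hom X A B \<Longrightarrow> g \<in> hom X A B \<Longrightarrow>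
        ccomp X (cadd X (csmult X r f) (csmult X s g)) x
          = cadd X (csmult X r (ccomp X f x)) (csmult X s (ccomp X g x))"
  using lld[THEN conjunct2, THEN conjunct2, THEN conjunct2, THEN conjunct2, THEN conjunct2, THEN conjunct2, THEN conjunct2, THEN conjunct2, THEN conjunct2, THEN conjunct2, THEN conjunct2, THEN conjunct2, THEN conjunct2] by blast

lemma zero_add: "f \<in> hom X A B \<Longrightarrow> cadd X (czero X A B) f = f"
  by (metis add_comm add_zero dom_obj cod_obj zero_hom)

lemma precomp_add: "x \<in> hom X Z A \<Longrightarrow> f \<in> hom X A B \<Longrightarrow> g \<in> hom X A B \<Longrightarrow>
   ccomp X (cadd X f g) x = cadd X (ccomp X f x) (ccomp X g x)"
  using precomp_lin[of x Z A f B g 1 1] one_smult[OF comp_hom[of x Z A f B]] one_smult[OF comp_hom[of x Z A g B]] one_smult[of f A B] one_smult[of g A B] by simp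

lemma zero_comp: "x \<in> hom X Z A \<Longrightarrow> B \<in> cObj X \<Longrightarrow> ccomp X (czero X A B) x = czero X Z B"
proof -
  assume x: "x \<in> hom X Z A" and B: "B \<in> cObj X"
  have A: "A \<in> cObj X" using x cod_obj by blast
  have Z: "Z \<in> cObj X" using x dom_obj by blast
  have z: "czero X A B \<in> hom X A B" using A B by blast
  have "czero X A B = cadd X (csmult X 0 (czero X A B)) (csmult X 0 (czero X A B))"
    using z by (simp add: zero_smult add_zero)
  hence "ccomp X (czero X A B) x = cadd X (csmult X 0 (ccomp X (czero X A B) x)) (csmult X 0 (ccomp X (czero X A B) x))"
    using precomp_lin[OF x z z, of 0 0] by simp
  also have "\<dots> = czero X Z B" using comp_hom[OF x z] add_zero[OF zero_hom[OF Z B]] by (simp add: zero_smult)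
  finally show ?thesis .
qed

lemma precomp_smult: "x \<in> hom X Z A \<Longrightarrow> f \<in> hom X A B \<Longrightarrow>
   ccomp X (csmult X r f) x = csmult X r (ccomp X f x)"
proof -
  assume x: "x \<in> hom X Z A" and f: "f \<in> hom X A B"
  have "csmult X r f = cadd X (csmult X r f) (csmult X 0 f)"
    using f by (simp add: zero_smult add_zero smult_hom)
  hence "ccomp X (csmult X r f) x = cadd X (csmult X r (ccomp X f x)) (csmult X 0 (ccomp X f x))"
    using precomp_lin[OF x f f, of r 0] by simp
  thus ?thesis using comp_hom[OF x f] by (simp add: zero_smult add_zero smult_hom)
qed

lemma term_obj: "cterm X \<in> cObj X" using cld[THEN conjunct2, THEN conjunct1] by blast
lemma term_unique: "t \<in> hom X A (cterm X) \<Longrightarrow> t' \<in> hom X A (cterm X) \<Longrightarrow> t = t'"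
proof -
  assume a: "t \<in> hom X A (cterm X)" "t' \<in> hom X A (cterm X)"
  have "\<forall>A\<in>cObj X. \<exists>!t. t \<in> hom X A (cterm X)" using cld[THEN conjunct2, THEN conjunct2, THEN conjunct1] by blast
  thus ?thesis using a dom_obj[OF a(1)] by blast
qed
lemmas cl4 = cld[THEN conjunct2, THEN conjunct2, THEN conjunct2, THEN conjunct1, rule_format]
lemma prod_obj[intro]: "A \<in> cObj X \<Longrightarrow> B \<in> cObj X \<Longrightarrow> cprod X A B \<in> cObj X"
  using cl4 by blast
lemma pr1_hom[intro]: "A \<in> cObj X \<Longrightarrow> B \<in> cObj X \<Longrightarrow> cpr1 X A B \<in> hom X (cprod X A B) A"
  using cl4 by blast
lemma pr2_hom[intro]: "A \<in> cObj X \<Longrightarrow> B \<in> cObj X \<Longrightarrow> cpr2 X A B \<in> hom X (cprod X A B) B"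
  using cl4 by blast
lemma pr1_klin: "A \<in> cObj X \<Longrightarrow> B \<in> cObj X \<Longrightarrow> k_linear X (cpr1 X A B)"
  using cl4 by blast
lemma pr2_klin: "A \<in> cObj X \<Longrightarrow> B \<in> cObj X \<Longrightarrow> k_linear X (cpr2 X A B)"
  using cl4 by blast
lemmas cl5 = cld[THEN conjunct2, THEN conjunct2, THEN conjunct2, THEN conjunct2, THEN conjunct1, rule_format]
lemma pair_hom[intro]: "f \<in> hom X Z A \<Longrightarrow> g \<in> hom X Z B \<Longrightarrow> cpair X f g \<in> hom X Z (cprod X A B)"
  using cl5 by blast
lemma pr1_pair[simp]: "f \<in> hom X Z A \<Longrightarrow> g \<in> hom X Z B \<Longrightarrow> ccomp X (cpr1 X A B) (cpair X f g) = f"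
  using cl5 by blast
lemma pr2_pair[simp]: "f \<in> hom X Z A \<Longrightarrow> g \<in> hom X Z B \<Longrightarrow> ccomp X (cpr2 X A B) (cpair X f g) = g"
  using cl5 by blast
lemma pair_eta: "h \<in> hom X Z (cprod X A B) \<Longrightarrow>
        cpair X (ccomp X (cpr1 X A B) h) (ccomp X (cpr2 X A B) h) = h"
  using cld[THEN conjunct2, THEN conjunct2, THEN conjunct2, THEN conjunct2, THEN conjunct2] by blast

lemma pair_comp: "f \<in> hom X Z A \<Longrightarrow> g \<in> hom X Z B \<Longrightarrow> h \<in> hom X W Z \<Longrightarrow>
  ccomp X (cpair X f g) h = cpair X (ccomp X f h) (ccomp X g h)"
proof -
  assume f: "f \<in> hom X Z A" and g: "g \<in> hom X Z B" and h: "h \<in> hom X W Z"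
  have A: "A \<in> cObj X" and B: "B \<in> cObj X" using f g cod_obj by blast+
  have p: "cpair X f g \<in> hom X Z (cprod X A B)" using f g by blast
  have "ccomp X (cpair X f g) h = cpair X (ccomp X (cpr1 X A B) (ccomp X (cpair X f g) h)) (ccomp X (cpr2 X A B) (ccomp X (cpair X f g) h))"
    using pair_eta[OF comp_hom[OF h p]] by simp
  also have "\<dots> = cpair X (ccomp X f h) (ccomp X g h)"
    using assoc[OF h p pr1_hom[OF A B]] assoc[OF h p pr2_hom[OF A B]] f g by simp
  finally show ?thesis .
qed

lemma pair_id: "A \<in> cObj X \<Longrightarrow> B \<in> cObj X \<Longrightarrow> cpair X (cpr1 X A B) (cpr2 X A B) = cid X (cprod X A B)"
  using pair_eta[OF id_hom[OF prod_obj]] id_r pr1_hom pr2_hom by metis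



lemma D_hom[intro]: "f \<in> hom X A B \<Longrightarrow> cD X f \<in> hom X (cprod X A A) B"
  using cdcd[THEN conjunct2, THEN conjunct1] by blast
lemma D_lin: "f \<in> hom X A B \<Longrightarrow> g \<in> hom X A B \<Longrightarrow>
        cD X (cadd X (csmult X r f) (csmult X s g)) = cadd X (csmult X r (cD X f)) (csmult X s (cD X g))"
  using cdcd[THEN conjunct2, THEN conjunct2, THEN conjunct1] by blast
lemmas D2raw = cdcd[THEN conjunct2, THEN conjunct2, THEN conjunct2, THEN conjunct1, unfolded Let_def]
lemma D2: "f \<in> hom X A B \<Longrightarrow>
   ccomp X (cD X f) (cpair X (cpr1 X A (cprod X A A)) (cadd X (csmult X r (ccomp X (cpr1 X A A) (cpr2 X A (cprod X A A)))) (csmult X s (ccomp X (cpr2 X A A) (cpr2 X A (cprod X A A))))))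
   = cadd X (csmult X r (ccomp X (cD X f) (cpair X (cpr1 X A (cprod X A A)) (ccomp X (cpr1 X A A) (cpr2 X A (cprod X A A))))))
            (csmult X s (ccomp X (cD X f) (cpair X (cpr1 X A (cprod X A A)) (ccomp X (cpr2 X A A) (cpr2 X A (cprod X A A))))))"
  using D2raw by blast
lemma D_id: "A \<in> cObj X \<Longrightarrow> cD X (cid X A) = cpr2 X A A" using cdcd[THEN conjunct2, THEN conjunct2, THEN conjunct2, THEN conjunct2, THEN conjunct1] by blast
lemma D_pr1: "A \<in> cObj X \<Longrightarrow> B \<in> cObj X \<Longrightarrow>
   cD X (cpr1 X A B) = ccomp X (cpr1 X A B) (cpr2 X (cprod X A B) (cprod X A B))" using cdcd[THEN conjunct2, THEN conjunct2, THEN conjunct2, THEN conjunct2, THEN conjunct2, THEN conjunct1] by blast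
lemma D_pr2: "A \<in> cObj X \<Longrightarrow> B \<in> cObj X \<Longrightarrow>
   cD X (cpr2 X A B) = ccomp X (cpr2 X A B) (cpr2 X (cprod X A B) (cprod X A B))" using cdcd[THEN conjunct2, THEN conjunct2, THEN conjunct2, THEN conjunct2, THEN conjunct2, THEN conjunct1] by blast
lemma D_pair: "f \<in> hom X Z A \<Longrightarrow> g \<in> hom X Z B \<Longrightarrow>
        cD X (cpair X f g) = cpair X (cD X f) (cD X g)" using cdcd[THEN conjunct2, THEN conjunct2, THEN conjunct2, THEN conjunct2, THEN conjunct2, THEN conjunct2, THEN conjunct1] by blast
lemma D_comp: "f \<in> hom X A B \<Longrightarrow> g \<in> hom X B E \<Longrightarrow>
        cD X (ccomp X g f) = ccomp X (cD X g) (cpair X (ccomp X f (cpr1 X A A)) (cD X f))" using cdcd[THEN conjunct2, THEN conjunct2, THEN conjunct2, THEN conjunct2, THEN conjunct2, THEN conjunct2, THEN conjunct2, THEN conjunct1] by blast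
lemma D6: "f \<in> hom X A B \<Longrightarrow>
        ccomp X (cD X (cD X f))
          (cpair X (cpair X (cpr1 X A A) (czero X (cprod X A A) A))
                   (cpair X (czero X (cprod X A A) A) (cpr2 X A A))) = cD X f" using cdcd[THEN conjunct2, THEN conjunct2, THEN conjunct2, THEN conjunct2, THEN conjunct2, THEN conjunct2, THEN conjunct2, THEN conjunct2, THEN conjunct1] by blast
lemmas D7raw = cdcd[THEN conjunct2, THEN conjunct2, THEN conjunct2, THEN conjunct2, THEN conjunct2,
   THEN conjunct2, THEN conjunct2, THEN conjunct2, THEN conjunct2, unfolded Let_def]
lemma D7: "f \<in> hom X A B \<Longrightarrow>
   ccomp X (cD X (cD X f)) (cpair X (cpair X (ccomp X (cpr1 X A A) (cpr1 X (cprod X A A) (cprod X A A))) (ccomp X (cpr2 X A A) (cpr1 X (cprod X A A) (cprod X A A))))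
                                    (cpair X (ccomp X (cpr1 X A A) (cpr2 X (cprod X A A) (cprod X A A))) (ccomp X (cpr2 X A A) (cpr2 X (cprod X A A) (cprod X A A)))))
   = ccomp X (cD X (cD X f)) (cpair X (cpair X (ccomp X (cpr1 X A A) (cpr1 X (cprod X A A) (cprod X A A))) (ccomp X (cpr1 X A A) (cpr2 X (cprod X A A) (cprod X A A))))
                                    (cpair X (ccomp X (cpr2 X A A) (cpr1 X (cprod X A A) (cprod X A A))) (ccomp X (cpr2 X A A) (cpr2 X (cprod X A A) (cprod X A A)))))"
  using D7raw by blast

lemma Dlin_app: "\<beta> \<in> hom X C B \<Longrightarrow> D_linear X \<beta> \<Longrightarrow> x \<in> hom X Z C \<Longrightarrow> v \<in> hom X Z C \<Longrightarrow>
   ccomp X (cD X \<beta>) (cpair X x v) = ccomp X \<beta> v"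
proof -
  assume b: "\<beta> \<in> hom X C B" and dl: "D_linear X \<beta>" and x: "x \<in> hom X Z C" and v: "v \<in> hom X Z C"
  have C: "C \<in> cObj X" using b dom_obj by blast
  have "cdom X \<beta> = C" using b unfolding hom_def by simp
  hence "cD X \<beta> = ccomp X \<beta> (cpr2 X C C)" using dl unfolding D_linear_def by simp
  thus ?thesis using assoc[OF pair_hom[OF x v] pr2_hom[OF C C] b] x v by simp
qed

lemma Dlin_klin: "\<beta> \<in> hom X C B \<Longrightarrow> D_linear X \<beta> \<Longrightarrow> x \<in> hom X Z C \<Longrightarrow> y \<in> hom X Z C \<Longrightarrow>
   ccomp X \<beta> (cadd X (csmult X r x) (csmult X s y)) = cadd X (csmult X r (ccomp X \<beta> x)) (csmult X s (ccomp X \<beta> y))"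
proof -
  assume b: "\<beta> \<in> hom X C B" and dl: "D_linear X \<beta>" and x: "x \<in> hom X Z C" and y: "y \<in> hom X Z C"
  have C: "C \<in> cObj X" using b dom_obj by blast
  define CC where "CC = cprod X C C"
  have CC: "CC \<in> cObj X" using C CC_def by blast
  define q1 where "q1 = cpr1 X C CC"
  define Pq where "Pq = cpr2 X C CC"
  define q2 where "q2 = ccomp X (cpr1 X C C) Pq"
  define q3 where "q3 = ccomp X (cpr2 X C C) Pq"
  define h where "h = cpair X x (cpair X x y)"
  have xy: "cpair X x y \<in> hom X Z CC" using x y CC_def by blast
  have h: "h \<in> hom X Z (cprod X C CC)" using x xy h_def by blast
  have q1: "q1 \<in> hom X (cprod X C CC) C" using q1_def C CC by blast
  have Pq: "Pq \<in> hom X (cprod X C CC) CC" using Pq_def C CC by blast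
  have q2: "q2 \<in> hom X (cprod X C CC) C" using q2_def Pq C CC_def by blast
  have q3: "q3 \<in> hom X (cprod X C CC) C" using q3_def Pq C CC_def by blast
  have q1h: "ccomp X q1 h = x" using q1_def h_def x xy by simp
  have Pqh: "ccomp X Pq h = cpair X x y" using Pq_def h_def x xy by simp
  have q2h: "ccomp X q2 h = x" unfolding q2_def
    using assoc[OF h Pq pr1_hom[OF C C, folded CC_def]] Pqh x y CC_def by simp
  have q3h: "ccomp X q3 h = y" unfolding q3_def
    using assoc[OF h Pq pr2_hom[OF C C, folded CC_def]] Pqh x y CC_def by simp
  have Db: "cD X \<beta> \<in> hom X (cprod X C C) B" using b by blast
  have lin: "cadd X (csmult X r q2) (csmult X s q3) \<in> hom X (cprod X C CC) C" using q2 q3 by blast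
  have e: "ccomp X (cD X \<beta>) (cpair X q1 (cadd X (csmult X r q2) (csmult X s q3)))
     = cadd X (csmult X r (ccomp X (cD X \<beta>) (cpair X q1 q2))) (csmult X s (ccomp X (cD X \<beta>) (cpair X q1 q3)))"
    using D2[OF b, of r s] unfolding q1_def q2_def q3_def Pq_def CC_def .
  have p1: "cpair X q1 (cadd X (csmult X r q2) (csmult X s q3)) \<in> hom X (cprod X C CC) (cprod X C C)"
    using q1 lin by blast
  have p2: "cpair X q1 q2 \<in> hom X (cprod X C CC) (cprod X C C)" using q1 q2 by blast
  have p3: "cpair X q1 q3 \<in> hom X (cprod X C CC) (cprod X C C)" using q1 q3 by blast
  have "ccomp X (ccomp X (cD X \<beta>) (cpair X q1 (cadd X (csmult X r q2) (csmult X s q3)))) h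
      = ccomp X (cD X \<beta>) (cpair X x (cadd X (csmult X r x) (csmult X s y)))"
    using assoc[OF h p1 Db] pair_comp[OF q1 lin h] precomp_lin[OF h q2 q3] q1h q2h q3h by simp
  also have "\<dots> = ccomp X \<beta> (cadd X (csmult X r x) (csmult X s y))"
    using Dlin_app[OF b dl x] x y by blast
  finally have L: "ccomp X (ccomp X (cD X \<beta>) (cpair X q1 (cadd X (csmult X r q2) (csmult X s q3)))) h
     = ccomp X \<beta> (cadd X (csmult X r x) (csmult X s y))" .
  have A2: "ccomp X (ccomp X (cD X \<beta>) (cpair X q1 q2)) h = ccomp X \<beta> x"
    using assoc[OF h p2 Db] pair_comp[OF q1 q2 h] q1h q2h Dlin_app[OF b dl x x] by simp
  have A3: "ccomp X (ccomp X (cD X \<beta>) (cpair X q1 q3)) h = ccomp X \<beta> y"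
    using assoc[OF h p3 Db] pair_comp[OF q1 q3 h] q1h q3h Dlin_app[OF b dl x y] by simp
  have "ccomp X (cadd X (csmult X r (ccomp X (cD X \<beta>) (cpair X q1 q2))) (csmult X s (ccomp X (cD X \<beta>) (cpair X q1 q3)))) h
      = cadd X (csmult X r (ccomp X \<beta> x)) (csmult X s (ccomp X \<beta> y))"
    using precomp_lin[OF h comp_hom[OF p2 Db] comp_hom[OF p3 Db]] A2 A3 by simp
  thus ?thesis using L e by simp
qed

lemma Dlin_zero: "\<beta> \<in> hom X C B \<Longrightarrow> D_linear X \<beta> \<Longrightarrow> Z \<in> cObj X \<Longrightarrow>
   ccomp X \<beta> (czero X Z C) = czero X Z B"
proof -
  assume b: "\<beta> \<in> hom X C B" and dl: "D_linear X \<beta>" and Z: "Z \<in> cObj X"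
  have C: "C \<in> cObj X" and B: "B \<in> cObj X" using b dom_obj cod_obj by blast+
  have z: "czero X Z C \<in> hom X Z C" using Z C by blast
  have "czero X Z C = cadd X (csmult X 0 (czero X Z C)) (csmult X 0 (czero X Z C))"
    using z add_zero[OF z] by (simp add: zero_smult)
  hence "ccomp X \<beta> (czero X Z C) = cadd X (csmult X 0 (ccomp X \<beta> (czero X Z C))) (csmult X 0 (ccomp X \<beta> (czero X Z C)))"
    using Dlin_klin[OF b dl z z, of 0 0] by simp
  also have "\<dots> = czero X Z B" using comp_hom[OF z b] add_zero[OF zero_hom[OF Z B]] by (simp add: zero_smult)
  finally show ?thesis .
qed


lemma pair_ext: "h \<in> hom X Z (cprod X A B) \<Longrightarrow> k \<in> hom X Z (cprod X A B) \<Longrightarrow>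
  ccomp X (cpr1 X A B) h = ccomp X (cpr1 X A B) k \<Longrightarrow> ccomp X (cpr2 X A B) h = ccomp X (cpr2 X A B) k \<Longrightarrow> h = k"
  by (metis pair_eta)

lemma inv_arr_props: "iso X w \<Longrightarrow> w \<in> hom X A B \<Longrightarrow>
   inv_arr X w \<in> hom X B A \<and> ccomp X (inv_arr X w) w = cid X A \<and> ccomp X w (inv_arr X w) = cid X B"
proof -
  assume i: "iso X w" and w: "w \<in> hom X A B"
  have d: "cdom X w = A" "ccod X w = B" using w unfolding hom_def by auto
  have "\<exists>g. g \<in> hom X (ccod X w) (cdom X w) \<and> ccomp X g w = cid X (cdom X w) \<and> ccomp X w g = cid X (ccod X w)"
    using i unfolding iso_def by blast
  from someI_ex[OF this] show ?thesis unfolding inv_arr_def d .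
qed

lemma id_iso: "A \<in> cObj X \<Longrightarrow> iso X (cid X A)"
proof -
  assume A: "A \<in> cObj X"
  have h: "cid X A \<in> hom X A A" using A by blast
  hence "cid X A \<in> cArr X" "cdom X (cid X A) = A" "ccod X (cid X A) = A" unfolding hom_def by auto
  thus ?thesis unfolding iso_def using h id_r[OF h] by auto
qed

context
  fixes So :: "'o \<Rightarrow> 'o" and Sa :: "'a \<Rightarrow> 'a" and mu eta :: "'o \<Rightarrow> 'a"
  assumes mon: "cart_diff_monad X So Sa mu eta"
begin

lemmas mond = mon[unfolded cart_diff_monad_def]
lemma monad: "monad X So Sa mu eta" using mond by blast
lemma sdf: "strong_cart_diff_functor X X So Sa" using mond by blast
lemmas monadd = monad[unfolded monad_def]
lemma sfun: "cfunctor X X So Sa" using monadd by blast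
lemmas fund = sfun[unfolded cfunctor_def]
lemma S_obj[intro]: "A \<in> cObj X \<Longrightarrow> So A \<in> cObj X" using fund[THEN conjunct1] by blast
lemma S_hom[intro]: "f \<in> hom X A B \<Longrightarrow> Sa f \<in> hom X (So A) (So B)" using fund[THEN conjunct2, THEN conjunct1] by blast
lemma S_id: "A \<in> cObj X \<Longrightarrow> Sa (cid X A) = cid X (So A)" using fund[THEN conjunct2, THEN conjunct2, THEN conjunct1] by blast
lemma S_comp: "f \<in> hom X A B \<Longrightarrow> g \<in> hom X B E \<Longrightarrow> Sa (ccomp X g f) = ccomp X (Sa g) (Sa f)" using fund[THEN conjunct2, THEN conjunct2, THEN conjunct2] by blast
lemma eta_hom[intro]: "A \<in> cObj X \<Longrightarrow> eta A \<in> hom X A (So A)" using monadd[THEN conjunct2, THEN conjunct1] by blast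
lemma mu_hom[intro]: "A \<in> cObj X \<Longrightarrow> mu A \<in> hom X (So (So A)) (So A)" using monadd[THEN conjunct2, THEN conjunct1] by blast
lemma eta_nat: "f \<in> hom X A B \<Longrightarrow> ccomp X (Sa f) (eta A) = ccomp X (eta B) f" using monadd[THEN conjunct2, THEN conjunct2, THEN conjunct1] by blast
lemma mu_nat: "f \<in> hom X A B \<Longrightarrow> ccomp X (Sa f) (mu A) = ccomp X (mu B) (Sa (Sa f))" using monadd[THEN conjunct2, THEN conjunct2, THEN conjunct1] by blast
lemmas sdfd = sdf[unfolded strong_cart_diff_functor_def]
lemma slf: "strong_cart_lin_functor X X So Sa" using sdfd by blast
lemma S_D: "f \<in> hom X A B \<Longrightarrow> cD X (Sa f) = ccomp X (Sa (cD X f)) (inv_arr X (omega X X So Sa A A))"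
  using sdfd by blast
lemmas slfd = slf[unfolded strong_cart_lin_functor_def]
lemma omega_iso: "A \<in> cObj X \<Longrightarrow> B \<in> cObj X \<Longrightarrow> iso X (omega X X So Sa A B)" using slfd[THEN conjunct2, THEN conjunct2, THEN conjunct1] by blast
lemma S_lin: "f \<in> hom X A B \<Longrightarrow> g \<in> hom X A B \<Longrightarrow>
   Sa (cadd X (csmult X r f) (csmult X s g)) = cadd X (csmult X r (Sa f)) (csmult X s (Sa g))" using slfd[THEN conjunct2, THEN conjunct2, THEN conjunct2] by blast

lemma S_add: "f \<in> hom X A B \<Longrightarrow> g \<in> hom X A B \<Longrightarrow> Sa (cadd X f g) = cadd X (Sa f) (Sa g)"
  using S_lin[of f A B g 1 1] one_smult[of f A B] one_smult[of g A B] one_smult[OF S_hom[of f A B]]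
    one_smult[OF S_hom[of g A B]] by simp

lemma S_smult: "f \<in> hom X A B \<Longrightarrow> Sa (csmult X r f) = csmult X r (Sa f)"
proof -
  assume f: "f \<in> hom X A B"
  have A: "A \<in> cObj X" and B: "B \<in> cObj X" using f dom_obj cod_obj by blast+
  have "csmult X r f = cadd X (csmult X r f) (csmult X 0 f)" using f add_zero[OF smult_hom[OF f]] zero_smult[OF f] by simp
  hence "Sa (csmult X r f) = cadd X (csmult X r (Sa f)) (csmult X 0 (Sa f))" using S_lin[OF f f, of r 0] by simp
  thus ?thesis using zero_smult[OF S_hom[OF f]] add_zero[OF smult_hom[OF S_hom[OF f]]] by simp
qed

lemma S_zero: "A \<in> cObj X \<Longrightarrow> B \<in> cObj X \<Longrightarrow> Sa (czero X A B) = czero X (So A) (So B)"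
proof -
  assume A: "A \<in> cObj X" and B: "B \<in> cObj X"
  have z: "czero X A B \<in> hom X A B" using A B by blast
  have "czero X A B = csmult X 0 (czero X A B)" using zero_smult[OF z] by simp
  hence "Sa (czero X A B) = csmult X 0 (Sa (czero X A B))" using S_smult[OF z] by metis
  thus ?thesis using zero_smult[OF S_hom[OF z]] by simp
qed

lemma omega_hom[intro]: "A \<in> cObj X \<Longrightarrow> B \<in> cObj X \<Longrightarrow> omega X X So Sa A B \<in> hom X (So (cprod X A B)) (cprod X (So A) (So B))"
  unfolding omega_def by (intro pair_hom S_hom pr1_hom pr2_hom)

lemma omega_pr1: "A \<in> cObj X \<Longrightarrow> B \<in> cObj X \<Longrightarrow> ccomp X (cpr1 X (So A) (So B)) (omega X X So Sa A B) = Sa (cpr1 X A B)"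
  unfolding omega_def using S_hom[OF pr1_hom[of A B]] S_hom[OF pr2_hom[of A B]] by simp
lemma omega_pr2: "A \<in> cObj X \<Longrightarrow> B \<in> cObj X \<Longrightarrow> ccomp X (cpr2 X (So A) (So B)) (omega X X So Sa A B) = Sa (cpr2 X A B)"
  unfolding omega_def using S_hom[OF pr1_hom[of A B]] S_hom[OF pr2_hom[of A B]] by simp

lemma winv: "A \<in> cObj X \<Longrightarrow> B \<in> cObj X \<Longrightarrow>
   inv_arr X (omega X X So Sa A B) \<in> hom X (cprod X (So A) (So B)) (So (cprod X A B)) \<and>
   ccomp X (inv_arr X (omega X X So Sa A B)) (omega X X So Sa A B) = cid X (So (cprod X A B)) \<and>
   ccomp X (omega X X So Sa A B) (inv_arr X (omega X X So Sa A B)) = cid X (cprod X (So A) (So B))"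
  using inv_arr_props[OF omega_iso omega_hom] by blast

lemma S_Dcomp: "f \<in> hom X A B \<Longrightarrow> Sa (cD X f) = ccomp X (cD X (Sa f)) (omega X X So Sa A A)"
proof -
  assume f: "f \<in> hom X A B"
  have A: "A \<in> cObj X" using f dom_obj by blast
  note w = winv[OF A A]
  have "ccomp X (cD X (Sa f)) (omega X X So Sa A A)
     = ccomp X (ccomp X (Sa (cD X f)) (inv_arr X (omega X X So Sa A A))) (omega X X So Sa A A)"
    using S_D[OF f] by simp
  also have "\<dots> = ccomp X (Sa (cD X f)) (cid X (So (cprod X A A)))"
    using assoc[OF omega_hom[OF A A] w[THEN conjunct1] S_hom[OF D_hom[OF f]]] w by simp
  also have "\<dots> = Sa (cD X f)" using id_r S_hom[OF D_hom[OF f]] by blast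
  finally show ?thesis by simp
qed

lemma S_Dlinish: "p \<in> hom X P E \<Longrightarrow> cD X p = ccomp X p (cpr2 X P P) \<Longrightarrow>
   cD X (Sa p) = ccomp X (Sa p) (cpr2 X (So P) (So P))"
proof -
  assume p: "p \<in> hom X P E" and dp: "cD X p = ccomp X p (cpr2 X P P)"
  have P: "P \<in> cObj X" using p dom_obj by blast
  note w = winv[OF P P]
  have SP: "So P \<in> cObj X" using P by blast
  have "cD X (Sa p) = ccomp X (Sa (ccomp X p (cpr2 X P P))) (inv_arr X (omega X X So Sa P P))"
    using S_D[OF p] dp by simp
  also have "\<dots> = ccomp X (ccomp X (Sa p) (ccomp X (cpr2 X (So P) (So P)) (omega X X So Sa P P))) (inv_arr X (omega X X So Sa P P))"
    using S_comp[OF pr2_hom[OF P P] p] omega_pr2[OF P P] by simp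
  also have "\<dots> = ccomp X (Sa p) (ccomp X (ccomp X (cpr2 X (So P) (So P)) (omega X X So Sa P P)) (inv_arr X (omega X X So Sa P P)))"
    using assoc[OF w[THEN conjunct1] comp_hom[OF omega_hom[OF P P] pr2_hom[OF SP SP]] S_hom[OF p]] by simp
  also have "\<dots> = ccomp X (Sa p) (ccomp X (cpr2 X (So P) (So P)) (cid X (cprod X (So P) (So P))))"
    using assoc[OF w[THEN conjunct1] omega_hom[OF P P] pr2_hom[OF SP SP]] w by simp
  also have "\<dots> = ccomp X (Sa p) (cpr2 X (So P) (So P))" using id_r[OF pr2_hom[OF SP SP]] by simp
  finally show ?thesis .
qed


lemma alg_prod_hom[intro]: "\<alpha> \<in> hom X (So A) A \<Longrightarrow> \<beta> \<in> hom X (So B) B \<Longrightarrow>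
   alg_prod X So Sa A \<alpha> B \<beta> \<in> hom X (So (cprod X A B)) (cprod X A B)"
proof -
  assume a: "\<alpha> \<in> hom X (So A) A" and b: "\<beta> \<in> hom X (So B) B"
  have A: "A \<in> cObj X" and B: "B \<in> cObj X" using a b cod_obj by blast+
  show ?thesis unfolding alg_prod_def
    using omega_hom[OF A B] comp_hom[OF pr1_hom[OF S_obj[OF A] S_obj[OF B]] a]
      comp_hom[OF pr2_hom[OF S_obj[OF A] S_obj[OF B]] b] by blast
qed

lemma alg_prod_pr1: "\<alpha> \<in> hom X (So A) A \<Longrightarrow> \<beta> \<in> hom X (So B) B \<Longrightarrow>
   ccomp X (cpr1 X A B) (alg_prod X So Sa A \<alpha> B \<beta>) = ccomp X \<alpha> (Sa (cpr1 X A B))"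
proof -
  assume a: "\<alpha> \<in> hom X (So A) A" and b: "\<beta> \<in> hom X (So B) B"
  have A: "A \<in> cObj X" and B: "B \<in> cObj X" using a b cod_obj by blast+
  have SA: "So A \<in> cObj X" and SB: "So B \<in> cObj X" using A B by blast+
  have x: "ccomp X \<alpha> (cpr1 X (So A) (So B)) \<in> hom X (cprod X (So A) (So B)) A" using a SA SB by blast
  have y: "ccomp X \<beta> (cpr2 X (So A) (So B)) \<in> hom X (cprod X (So A) (So B)) B" using b SA SB by blast
  have "ccomp X (cpr1 X A B) (alg_prod X So Sa A \<alpha> B \<beta>)
     = ccomp X (ccomp X (cpr1 X A B) (cpair X (ccomp X \<alpha> (cpr1 X (So A) (So B))) (ccomp X \<beta> (cpr2 X (So A) (So B))))) (omega X X So Sa A B)"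
    unfolding alg_prod_def using assoc[OF omega_hom[OF A B] pair_hom[OF x y] pr1_hom[OF A B]] .
  also have "\<dots> = ccomp X (ccomp X \<alpha> (cpr1 X (So A) (So B))) (omega X X So Sa A B)" using x y by simp
  also have "\<dots> = ccomp X \<alpha> (Sa (cpr1 X A B))"
    using assoc[OF omega_hom[OF A B] pr1_hom[OF SA SB] a] omega_pr1[OF A B] by simp
  finally show ?thesis .
qed

lemma alg_prod_pr2: "\<alpha> \<in> hom X (So A) A \<Longrightarrow> \<beta> \<in> hom X (So B) B \<Longrightarrow>
   ccomp X (cpr2 X A B) (alg_prod X So Sa A \<alpha> B \<beta>) = ccomp X \<beta> (Sa (cpr2 X A B))"
proof -
  assume a: "\<alpha> \<in> hom X (So A) A" and b: "\<beta> \<in> hom X (So B) B"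
  have A: "A \<in> cObj X" and B: "B \<in> cObj X" using a b cod_obj by blast+
  have SA: "So A \<in> cObj X" and SB: "So B \<in> cObj X" using A B by blast+
  have x: "ccomp X \<alpha> (cpr1 X (So A) (So B)) \<in> hom X (cprod X (So A) (So B)) A" using a SA SB by blast
  have y: "ccomp X \<beta> (cpr2 X (So A) (So B)) \<in> hom X (cprod X (So A) (So B)) B" using b SA SB by blast
  have "ccomp X (cpr2 X A B) (alg_prod X So Sa A \<alpha> B \<beta>)
     = ccomp X (ccomp X (cpr2 X A B) (cpair X (ccomp X \<alpha> (cpr1 X (So A) (So B))) (ccomp X \<beta> (cpr2 X (So A) (So B))))) (omega X X So Sa A B)"
    unfolding alg_prod_def using assoc[OF omega_hom[OF A B] pair_hom[OF x y] pr2_hom[OF A B]] .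
  also have "\<dots> = ccomp X (ccomp X \<beta> (cpr2 X (So A) (So B))) (omega X X So Sa A B)" using x y by simp
  also have "\<dots> = ccomp X \<beta> (Sa (cpr2 X A B))"
    using assoc[OF omega_hom[OF A B] pr2_hom[OF SA SB] b] omega_pr2[OF A B] by simp
  finally show ?thesis .
qed

lemma alg_prod_pair: "\<alpha> \<in> hom X (So A) A \<Longrightarrow> \<beta> \<in> hom X (So B) B \<Longrightarrow>
   alg_prod X So Sa A \<alpha> B \<beta> = cpair X (ccomp X \<alpha> (Sa (cpr1 X A B))) (ccomp X \<beta> (Sa (cpr2 X A B)))"
  using pair_eta[OF alg_prod_hom[of \<alpha> A \<beta> B]] alg_prod_pr1[of \<alpha> A \<beta> B] alg_prod_pr2[of \<alpha> A \<beta> B] by simp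

lemma alg_prod_is_alg: "is_alg X So Sa mu eta A \<alpha> \<Longrightarrow> is_alg X So Sa mu eta B \<beta> \<Longrightarrow>
   is_alg X So Sa mu eta (cprod X A B) (alg_prod X So Sa A \<alpha> B \<beta>)"
proof -
  assume ia: "is_alg X So Sa mu eta A \<alpha>" and ib: "is_alg X So Sa mu eta B \<beta>"
  have A: "A \<in> cObj X" and a: "\<alpha> \<in> hom X (So A) A" and amu: "ccomp X \<alpha> (mu A) = ccomp X \<alpha> (Sa \<alpha>)"
    and aeta: "ccomp X \<alpha> (eta A) = cid X A" using ia unfolding is_alg_def by auto
  have B: "B \<in> cObj X" and b: "\<beta> \<in> hom X (So B) B" and bmu: "ccomp X \<beta> (mu B) = ccomp X \<beta> (Sa \<beta>)"
    and beta: "ccomp X \<beta> (eta B) = cid X B" using ib unfolding is_alg_def by auto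
  let ?P = "cprod X A B"
  let ?g = "alg_prod X So Sa A \<alpha> B \<beta>"
  have P: "?P \<in> cObj X" using A B by blast
  have g: "?g \<in> hom X (So ?P) ?P" using a b by blast
  have p1: "cpr1 X A B \<in> hom X ?P A" and p2: "cpr2 X A B \<in> hom X ?P B" using A B by blast+
  have Sp1: "Sa (cpr1 X A B) \<in> hom X (So ?P) (So A)" and Sp2: "Sa (cpr2 X A B) \<in> hom X (So ?P) (So B)"
    using p1 p2 by blast+
  have muP: "mu ?P \<in> hom X (So (So ?P)) (So ?P)" using P by blast
  have etaP: "eta ?P \<in> hom X ?P (So ?P)" using P by blast
  have Sg: "Sa ?g \<in> hom X (So (So ?P)) (So ?P)" using g by blast
  have Sa_: "Sa \<alpha> \<in> hom X (So (So A)) (So A)" using a by blast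
  have Sb_: "Sa \<beta> \<in> hom X (So (So B)) (So B)" using b by blast
  have SSp1: "Sa (Sa (cpr1 X A B)) \<in> hom X (So (So ?P)) (So (So A))" using Sp1 by blast
  have SSp2: "Sa (Sa (cpr2 X A B)) \<in> hom X (So (So ?P)) (So (So B))" using Sp2 by blast
  have m1: "ccomp X (cpr1 X A B) (ccomp X ?g (mu ?P)) = ccomp X (ccomp X \<alpha> (Sa \<alpha>)) (Sa (Sa (cpr1 X A B)))"
  proof -
    have "ccomp X (cpr1 X A B) (ccomp X ?g (mu ?P)) = ccomp X (ccomp X \<alpha> (Sa (cpr1 X A B))) (mu ?P)"
      using assoc[OF muP g p1] alg_prod_pr1[OF a b] by simp
    also have "\<dots> = ccomp X \<alpha> (ccomp X (mu A) (Sa (Sa (cpr1 X A B))))"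
      using assoc[OF muP Sp1 a] mu_nat[OF p1] by simp
    also have "\<dots> = ccomp X (ccomp X \<alpha> (Sa \<alpha>)) (Sa (Sa (cpr1 X A B)))"
      using assoc[OF SSp1 mu_hom[OF A] a] amu by simp
    finally show ?thesis .
  qed
  have m2: "ccomp X (cpr1 X A B) (ccomp X ?g (Sa ?g)) = ccomp X (ccomp X \<alpha> (Sa \<alpha>)) (Sa (Sa (cpr1 X A B)))"
  proof -
    have "ccomp X (cpr1 X A B) (ccomp X ?g (Sa ?g)) = ccomp X (ccomp X \<alpha> (Sa (cpr1 X A B))) (Sa ?g)"
      using assoc[OF Sg g p1] alg_prod_pr1[OF a b] by simp
    also have "\<dots> = ccomp X \<alpha> (Sa (ccomp X (cpr1 X A B) ?g))"
      using assoc[OF Sg Sp1 a] S_comp[OF g p1] by simp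
    also have "\<dots> = ccomp X \<alpha> (ccomp X (Sa \<alpha>) (Sa (Sa (cpr1 X A B))))"
      using alg_prod_pr1[OF a b] S_comp[OF Sp1 a] by simp
    also have "\<dots> = ccomp X (ccomp X \<alpha> (Sa \<alpha>)) (Sa (Sa (cpr1 X A B)))"
      using assoc[OF SSp1 Sa_ a] by simp
    finally show ?thesis .
  qed
  have m3: "ccomp X (cpr2 X A B) (ccomp X ?g (mu ?P)) = ccomp X (ccomp X \<beta> (Sa \<beta>)) (Sa (Sa (cpr2 X A B)))"
  proof -
    have "ccomp X (cpr2 X A B) (ccomp X ?g (mu ?P)) = ccomp X (ccomp X \<beta> (Sa (cpr2 X A B))) (mu ?P)"
      using assoc[OF muP g p2] alg_prod_pr2[OF a b] by simp
    also have "\<dots> = ccomp X \<beta> (ccomp X (mu B) (Sa (Sa (cpr2 X A B))))"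
      using assoc[OF muP Sp2 b] mu_nat[OF p2] by simp
    also have "\<dots> = ccomp X (ccomp X \<beta> (Sa \<beta>)) (Sa (Sa (cpr2 X A B)))"
      using assoc[OF SSp2 mu_hom[OF B] b] bmu by simp
    finally show ?thesis .
  qed
  have m4: "ccomp X (cpr2 X A B) (ccomp X ?g (Sa ?g)) = ccomp X (ccomp X \<beta> (Sa \<beta>)) (Sa (Sa (cpr2 X A B)))"
  proof -
    have "ccomp X (cpr2 X A B) (ccomp X ?g (Sa ?g)) = ccomp X (ccomp X \<beta> (Sa (cpr2 X A B))) (Sa ?g)"
      using assoc[OF Sg g p2] alg_prod_pr2[OF a b] by simp
    also have "\<dots> = ccomp X \<beta> (Sa (ccomp X (cpr2 X A B) ?g))"
      using assoc[OF Sg Sp2 b] S_comp[OF g p2] by simp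
    also have "\<dots> = ccomp X \<beta> (ccomp X (Sa \<beta>) (Sa (Sa (cpr2 X A B))))"
      using alg_prod_pr2[OF a b] S_comp[OF Sp2 b] by simp
    also have "\<dots> = ccomp X (ccomp X \<beta> (Sa \<beta>)) (Sa (Sa (cpr2 X A B)))"
      using assoc[OF SSp2 Sb_ b] by simp
    finally show ?thesis .
  qed
  have mulaw: "ccomp X ?g (mu ?P) = ccomp X ?g (Sa ?g)"
    by (rule pair_ext[OF comp_hom[OF muP g] comp_hom[OF Sg g]]) (simp_all only: m1 m2 m3 m4)
  have e1: "ccomp X (cpr1 X A B) (ccomp X ?g (eta ?P)) = ccomp X (cpr1 X A B) (cid X ?P)"
  proof -
    have "ccomp X (cpr1 X A B) (ccomp X ?g (eta ?P)) = ccomp X (ccomp X \<alpha> (Sa (cpr1 X A B))) (eta ?P)"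
      using assoc[OF etaP g p1] alg_prod_pr1[OF a b] by simp
    also have "\<dots> = ccomp X \<alpha> (ccomp X (eta A) (cpr1 X A B))"
      using assoc[OF etaP Sp1 a] eta_nat[OF p1] by simp
    also have "\<dots> = cpr1 X A B"
      using assoc[OF p1 eta_hom[OF A] a] aeta id_l[OF p1] by simp
    finally show ?thesis using id_r[OF p1] by simp
  qed
  have e2: "ccomp X (cpr2 X A B) (ccomp X ?g (eta ?P)) = ccomp X (cpr2 X A B) (cid X ?P)"
  proof -
    have "ccomp X (cpr2 X A B) (ccomp X ?g (eta ?P)) = ccomp X (ccomp X \<beta> (Sa (cpr2 X A B))) (eta ?P)"
      using assoc[OF etaP g p2] alg_prod_pr2[OF a b] by simp
    also have "\<dots> = ccomp X \<beta> (ccomp X (eta B) (cpr2 X A B))"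
      using assoc[OF etaP Sp2 b] eta_nat[OF p2] by simp
    also have "\<dots> = cpr2 X A B"
      using assoc[OF p2 eta_hom[OF B] b] beta id_l[OF p2] by simp
    finally show ?thesis using id_r[OF p2] by simp
  qed
  have etalaw: "ccomp X ?g (eta ?P) = cid X ?P"
    by (rule pair_ext[OF comp_hom[OF etaP g] id_hom[OF P] e1 e2])
  show ?thesis unfolding is_alg_def using P g mulaw etalaw by blast
qed

lemma comp_Dlin: "\<alpha> \<in> hom X B A \<Longrightarrow> D_linear X \<alpha> \<Longrightarrow> p \<in> hom X P B \<Longrightarrow>
   cD X p = ccomp X p (cpr2 X P P) \<Longrightarrow> cD X (ccomp X \<alpha> p) = ccomp X (ccomp X \<alpha> p) (cpr2 X P P)"
proof -
  assume a: "\<alpha> \<in> hom X B A" and dl: "D_linear X \<alpha>" and p: "p \<in> hom X P B" and dp: "cD X p = ccomp X p (cpr2 X P P)"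
  have P: "P \<in> cObj X" using p dom_obj by blast
  have x: "ccomp X p (cpr1 X P P) \<in> hom X (cprod X P P) B" using p P by blast
  have y: "cD X p \<in> hom X (cprod X P P) B" using p by blast
  have "cD X (ccomp X \<alpha> p) = ccomp X (cD X \<alpha>) (cpair X (ccomp X p (cpr1 X P P)) (cD X p))"
    using D_comp[OF p a] .
  also have "\<dots> = ccomp X \<alpha> (cD X p)" using Dlin_app[OF a dl x y] .
  also have "\<dots> = ccomp X (ccomp X \<alpha> p) (cpr2 X P P)" using dp assoc[OF pr2_hom[OF P P] p a] by simp
  finally show ?thesis .
qed

lemma alg_prod_Dlin: "\<alpha> \<in> hom X (So A) A \<Longrightarrow> D_linear X \<alpha> \<Longrightarrow> \<beta> \<in> hom X (So B) B \<Longrightarrow> D_linear X \<beta> \<Longrightarrow>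
   D_linear X (alg_prod X So Sa A \<alpha> B \<beta>)"
proof -
  assume a: "\<alpha> \<in> hom X (So A) A" and da: "D_linear X \<alpha>" and b: "\<beta> \<in> hom X (So B) B" and db: "D_linear X \<beta>"
  have A: "A \<in> cObj X" and B: "B \<in> cObj X" using a b cod_obj by blast+
  let ?P = "cprod X A B"
  have P: "?P \<in> cObj X" using A B by blast
  have SP: "So ?P \<in> cObj X" using P by blast
  have p1: "cpr1 X A B \<in> hom X ?P A" and p2: "cpr2 X A B \<in> hom X ?P B" using A B by blast+
  have Sp1: "Sa (cpr1 X A B) \<in> hom X (So ?P) (So A)" and Sp2: "Sa (cpr2 X A B) \<in> hom X (So ?P) (So B)"
    using p1 p2 by blast+
  have DSp1: "cD X (Sa (cpr1 X A B)) = ccomp X (Sa (cpr1 X A B)) (cpr2 X (So ?P) (So ?P))"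
    using S_Dlinish[OF p1 D_pr1[OF A B]] .
  have DSp2: "cD X (Sa (cpr2 X A B)) = ccomp X (Sa (cpr2 X A B)) (cpr2 X (So ?P) (So ?P))"
    using S_Dlinish[OF p2 D_pr2[OF A B]] .
  have x: "ccomp X \<alpha> (Sa (cpr1 X A B)) \<in> hom X (So ?P) A" using Sp1 a by blast
  have y: "ccomp X \<beta> (Sa (cpr2 X A B)) \<in> hom X (So ?P) B" using Sp2 b by blast
  have dom: "cdom X (alg_prod X So Sa A \<alpha> B \<beta>) = So ?P" using alg_prod_hom[OF a b] unfolding hom_def by simp
  have "cD X (alg_prod X So Sa A \<alpha> B \<beta>) = cpair X (cD X (ccomp X \<alpha> (Sa (cpr1 X A B)))) (cD X (ccomp X \<beta> (Sa (cpr2 X A B))))"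
    using alg_prod_pair[OF a b] D_pair[OF x y] by simp
  also have "\<dots> = cpair X (ccomp X (ccomp X \<alpha> (Sa (cpr1 X A B))) (cpr2 X (So ?P) (So ?P))) (ccomp X (ccomp X \<beta> (Sa (cpr2 X A B))) (cpr2 X (So ?P) (So ?P)))"
    using comp_Dlin[OF a da Sp1 DSp1] comp_Dlin[OF b db Sp2 DSp2] by simp
  also have "\<dots> = ccomp X (alg_prod X So Sa A \<alpha> B \<beta>) (cpr2 X (So ?P) (So ?P))"
    using alg_prod_pair[OF a b] pair_comp[OF x y pr2_hom[OF SP SP]] by simp
  finally show ?thesis unfolding D_linear_def dom .
qed

lemma D_alg_mor: "is_alg X So Sa mu eta A \<alpha> \<Longrightarrow> D_linear X \<alpha> \<Longrightarrow>
            is_alg X So Sa mu eta B \<beta> \<Longrightarrow> D_linear X \<beta> \<Longrightarrow>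
            alg_mor X Sa A \<alpha> B \<beta> f \<Longrightarrow>
            alg_mor X Sa (cprod X A A) (alg_prod X So Sa A \<alpha> A \<alpha>) B \<beta> (cD X f)"
proof -
  assume ia: "is_alg X So Sa mu eta A \<alpha>" and da: "D_linear X \<alpha>" and ib: "is_alg X So Sa mu eta B \<beta>"
    and db: "D_linear X \<beta>" and am: "alg_mor X Sa A \<alpha> B \<beta> f"
  have A: "A \<in> cObj X" and a: "\<alpha> \<in> hom X (So A) A" using ia unfolding is_alg_def by auto
  have b: "\<beta> \<in> hom X (So B) B" using ib unfolding is_alg_def by auto
  have f: "f \<in> hom X A B" and fm: "ccomp X \<beta> (Sa f) = ccomp X f \<alpha>" using am unfolding alg_mor_def by auto
  have SA: "So A \<in> cObj X" using A by blast
  have Sf: "Sa f \<in> hom X (So A) (So B)" using f by blast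
  have DSf: "cD X (Sa f) \<in> hom X (cprod X (So A) (So A)) (So B)" using Sf by blast
  have om: "omega X X So Sa A A \<in> hom X (So (cprod X A A)) (cprod X (So A) (So A))" using A by blast
  have x: "ccomp X (Sa f) (cpr1 X (So A) (So A)) \<in> hom X (cprod X (So A) (So A)) (So B)" using Sf SA by blast
  have q: "cpair X (ccomp X \<alpha> (cpr1 X (So A) (So A))) (ccomp X \<alpha> (cpr2 X (So A) (So A))) \<in> hom X (cprod X (So A) (So A)) (cprod X A A)"
    using a SA by blast
  have Df: "cD X f \<in> hom X (cprod X A A) B" using f by blast
  have dom: "cdom X \<alpha> = So A" using a unfolding hom_def by simp
  have Da: "cD X \<alpha> = ccomp X \<alpha> (cpr2 X (So A) (So A))" using da unfolding D_linear_def dom .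
  have "ccomp X \<beta> (cD X (Sa f)) = ccomp X (cD X \<beta>) (cpair X (ccomp X (Sa f) (cpr1 X (So A) (So A))) (cD X (Sa f)))"
    using Dlin_app[OF b db x DSf] by simp
  also have "\<dots> = cD X (ccomp X \<beta> (Sa f))" using D_comp[OF Sf b] by simp
  also have "\<dots> = cD X (ccomp X f \<alpha>)" using fm by simp
  also have "\<dots> = ccomp X (cD X f) (cpair X (ccomp X \<alpha> (cpr1 X (So A) (So A))) (cD X \<alpha>))" using D_comp[OF a f] .
  finally have e: "ccomp X \<beta> (cD X (Sa f)) = ccomp X (cD X f) (cpair X (ccomp X \<alpha> (cpr1 X (So A) (So A))) (ccomp X \<alpha> (cpr2 X (So A) (So A))))"
    using Da by simp
  have "ccomp X \<beta> (Sa (cD X f)) = ccomp X \<beta> (ccomp X (cD X (Sa f)) (omega X X So Sa A A))"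
    using S_Dcomp[OF f] by simp
  also have "\<dots> = ccomp X (ccomp X \<beta> (cD X (Sa f))) (omega X X So Sa A A)"
    using assoc[OF om DSf b] .
  also have "\<dots> = ccomp X (cD X f) (alg_prod X So Sa A \<alpha> A \<alpha>)"
    unfolding e alg_prod_def using assoc[OF om q Df] by simp
  finally show ?thesis unfolding alg_mor_def using Df by simp
qed

lemma Dlin_add: "\<beta> \<in> hom X C B \<Longrightarrow> D_linear X \<beta> \<Longrightarrow> x \<in> hom X Z C \<Longrightarrow> y \<in> hom X Z C \<Longrightarrow>
   ccomp X \<beta> (cadd X x y) = cadd X (ccomp X \<beta> x) (ccomp X \<beta> y)"
  using Dlin_klin[of \<beta> C B x Z y 1 1] one_smult[of x Z C] one_smult[of y Z C]
    one_smult[OF comp_hom[of x Z C \<beta> B]] one_smult[OF comp_hom[of y Z C \<beta> B]] by simp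

lemma Dlin_smult: "\<beta> \<in> hom X C B \<Longrightarrow> D_linear X \<beta> \<Longrightarrow> x \<in> hom X Z C \<Longrightarrow>
   ccomp X \<beta> (csmult X r x) = csmult X r (ccomp X \<beta> x)"
proof -
  assume b: "\<beta> \<in> hom X C B" and dl: "D_linear X \<beta>" and x: "x \<in> hom X Z C"
  have "csmult X r x = cadd X (csmult X r x) (csmult X 0 x)" using add_zero[OF smult_hom[OF x]] zero_smult[OF x] by simp
  hence "ccomp X \<beta> (csmult X r x) = cadd X (csmult X r (ccomp X \<beta> x)) (csmult X 0 (ccomp X \<beta> x))"
    using Dlin_klin[OF b dl x x, of r 0] by simp
  thus ?thesis using zero_smult[OF comp_hom[OF x b]] add_zero[OF smult_hom[OF comp_hom[OF x b]]] by simp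
qed

lemma alg_hom: "is_alg X So Sa mu eta A \<alpha> \<Longrightarrow> \<alpha> \<in> hom X (So A) A"
  unfolding is_alg_def by blast
lemma alg_obj: "is_alg X So Sa mu eta A \<alpha> \<Longrightarrow> A \<in> cObj X"
  unfolding is_alg_def by blast

lemma alg_mor_id: "is_alg X So Sa mu eta A \<alpha> \<Longrightarrow> alg_mor X Sa A \<alpha> A \<alpha> (cid X A)"
  unfolding alg_mor_def using alg_hom alg_obj S_id id_r id_l by (metis id_hom)

lemma alg_mor_comp: "alg_mor X Sa A \<alpha> B \<beta> f \<Longrightarrow> alg_mor X Sa B \<beta> E \<gamma> g \<Longrightarrow> is_alg X So Sa mu eta A \<alpha>
   \<Longrightarrow> is_alg X So Sa mu eta B \<beta> \<Longrightarrow> is_alg X So Sa mu eta E \<gamma> \<Longrightarrow> alg_mor X Sa A \<alpha> E \<gamma> (ccomp X g f)"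
proof -
  assume f: "alg_mor X Sa A \<alpha> B \<beta> f" and g: "alg_mor X Sa B \<beta> E \<gamma> g" and ia: "is_alg X So Sa mu eta A \<alpha>"
    and ib: "is_alg X So Sa mu eta B \<beta>" and ic: "is_alg X So Sa mu eta E \<gamma>"
  have fh: "f \<in> hom X A B" and fe: "ccomp X \<beta> (Sa f) = ccomp X f \<alpha>" using f unfolding alg_mor_def by auto
  have gh: "g \<in> hom X B E" and ge: "ccomp X \<gamma> (Sa g) = ccomp X g \<beta>" using g unfolding alg_mor_def by auto
  have a: "\<alpha> \<in> hom X (So A) A" and b: "\<beta> \<in> hom X (So B) B" and c: "\<gamma> \<in> hom X (So E) E"
    using ia ib ic alg_hom by blast+
  have "ccomp X \<gamma> (Sa (ccomp X g f)) = ccomp X (ccomp X \<gamma> (Sa g)) (Sa f)"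
    using S_comp[OF fh gh] assoc[OF S_hom[OF fh] S_hom[OF gh] c] by simp
  also have "\<dots> = ccomp X g (ccomp X \<beta> (Sa f))" using ge assoc[OF S_hom[OF fh] b gh] by simp
  also have "\<dots> = ccomp X (ccomp X g f) \<alpha>" using fe assoc[OF a fh gh] by simp
  finally show ?thesis unfolding alg_mor_def using fh gh by blast
qed

lemma alg_mor_add: "alg_mor X Sa A \<alpha> B \<beta> f \<Longrightarrow> alg_mor X Sa A \<alpha> B \<beta> g \<Longrightarrow> is_alg X So Sa mu eta A \<alpha>
   \<Longrightarrow> is_alg X So Sa mu eta B \<beta> \<Longrightarrow> D_linear X \<beta> \<Longrightarrow> alg_mor X Sa A \<alpha> B \<beta> (cadd X f g)"
proof -
  assume f: "alg_mor X Sa A \<alpha> B \<beta> f" and g: "alg_mor X Sa A \<alpha> B \<beta> g" and ia: "is_alg X So Sa mu eta A \<alpha>"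
    and ib: "is_alg X So Sa mu eta B \<beta>" and db: "D_linear X \<beta>"
  have fh: "f \<in> hom X A B" and fe: "ccomp X \<beta> (Sa f) = ccomp X f \<alpha>" using f unfolding alg_mor_def by auto
  have gh: "g \<in> hom X A B" and ge: "ccomp X \<beta> (Sa g) = ccomp X g \<alpha>" using g unfolding alg_mor_def by auto
  have a: "\<alpha> \<in> hom X (So A) A" and b: "\<beta> \<in> hom X (So B) B" using ia ib alg_hom by blast+
  have "ccomp X \<beta> (Sa (cadd X f g)) = cadd X (ccomp X \<beta> (Sa f)) (ccomp X \<beta> (Sa g))"
    using S_add[OF fh gh] Dlin_add[OF b db S_hom[OF fh] S_hom[OF gh]] by simp
  also have "\<dots> = ccomp X (cadd X f g) \<alpha>" using fe ge precomp_add[OF a fh gh] by simp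
  finally show ?thesis unfolding alg_mor_def using fh gh by blast
qed

lemma alg_mor_smult: "alg_mor X Sa A \<alpha> B \<beta> f \<Longrightarrow> is_alg X So Sa mu eta A \<alpha>
   \<Longrightarrow> is_alg X So Sa mu eta B \<beta> \<Longrightarrow> D_linear X \<beta> \<Longrightarrow> alg_mor X Sa A \<alpha> B \<beta> (csmult X r f)"
proof -
  assume f: "alg_mor X Sa A \<alpha> B \<beta> f" and ia: "is_alg X So Sa mu eta A \<alpha>"
    and ib: "is_alg X So Sa mu eta B \<beta>" and db: "D_linear X \<beta>"
  have fh: "f \<in> hom X A B" and fe: "ccomp X \<beta> (Sa f) = ccomp X f \<alpha>" using f unfolding alg_mor_def by auto
  have a: "\<alpha> \<in> hom X (So A) A" and b: "\<beta> \<in> hom X (So B) B" using ia ib alg_hom by blast+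
  have "ccomp X \<beta> (Sa (csmult X r f)) = csmult X r (ccomp X \<beta> (Sa f))"
    using S_smult[OF fh] Dlin_smult[OF b db S_hom[OF fh]] by simp
  also have "\<dots> = ccomp X (csmult X r f) \<alpha>" using fe precomp_smult[OF a fh] by simp
  finally show ?thesis unfolding alg_mor_def using fh by blast
qed

lemma alg_mor_zero: "is_alg X So Sa mu eta A \<alpha> \<Longrightarrow> is_alg X So Sa mu eta B \<beta> \<Longrightarrow> D_linear X \<beta> \<Longrightarrow>
   alg_mor X Sa A \<alpha> B \<beta> (czero X A B)"
proof -
  assume ia: "is_alg X So Sa mu eta A \<alpha>" and ib: "is_alg X So Sa mu eta B \<beta>" and db: "D_linear X \<beta>"
  have a: "\<alpha> \<in> hom X (So A) A" and b: "\<beta> \<in> hom X (So B) B" using ia ib alg_hom by blast+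
  have A: "A \<in> cObj X" and B: "B \<in> cObj X" using ia ib alg_obj by blast+
  have "ccomp X \<beta> (Sa (czero X A B)) = czero X (So A) B"
    using S_zero[OF A B] Dlin_zero[OF b db S_obj[OF A]] by simp
  also have "\<dots> = ccomp X (czero X A B) \<alpha>" using zero_comp[OF a B] by simp
  finally show ?thesis unfolding alg_mor_def using A B by blast
qed

lemma alg_mor_pr1: "is_alg X So Sa mu eta A \<alpha> \<Longrightarrow> is_alg X So Sa mu eta B \<beta> \<Longrightarrow>
   alg_mor X Sa (cprod X A B) (alg_prod X So Sa A \<alpha> B \<beta>) A \<alpha> (cpr1 X A B)"
  unfolding alg_mor_def using alg_prod_pr1[OF alg_hom alg_hom] alg_obj by (metis pr1_hom)
lemma alg_mor_pr2: "is_alg X So Sa mu eta A \<alpha> \<Longrightarrow> is_alg X So Sa mu eta B \<beta> \<Longrightarrow>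
   alg_mor X Sa (cprod X A B) (alg_prod X So Sa A \<alpha> B \<beta>) B \<beta> (cpr2 X A B)"
  unfolding alg_mor_def using alg_prod_pr2[OF alg_hom alg_hom] alg_obj by (metis pr2_hom)

lemma alg_mor_pair: "alg_mor X Sa Z \<zeta> A \<alpha> f \<Longrightarrow> alg_mor X Sa Z \<zeta> B \<beta> g \<Longrightarrow> is_alg X So Sa mu eta Z \<zeta> \<Longrightarrow>
   is_alg X So Sa mu eta A \<alpha> \<Longrightarrow> is_alg X So Sa mu eta B \<beta> \<Longrightarrow>
   alg_mor X Sa Z \<zeta> (cprod X A B) (alg_prod X So Sa A \<alpha> B \<beta>) (cpair X f g)"
proof -
  assume f: "alg_mor X Sa Z \<zeta> A \<alpha> f" and g: "alg_mor X Sa Z \<zeta> B \<beta> g" and iz: "is_alg X So Sa mu eta Z \<zeta>"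
    and ia: "is_alg X So Sa mu eta A \<alpha>" and ib: "is_alg X So Sa mu eta B \<beta>"
  have fh: "f \<in> hom X Z A" and fe: "ccomp X \<alpha> (Sa f) = ccomp X f \<zeta>" using f unfolding alg_mor_def by auto
  have gh: "g \<in> hom X Z B" and ge: "ccomp X \<beta> (Sa g) = ccomp X g \<zeta>" using g unfolding alg_mor_def by auto
  have a: "\<alpha> \<in> hom X (So A) A" and b: "\<beta> \<in> hom X (So B) B" and z: "\<zeta> \<in> hom X (So Z) Z"
    using ia ib iz alg_hom by blast+
  have A: "A \<in> cObj X" and B: "B \<in> cObj X" using ia ib alg_obj by blast+
  have p: "cpair X f g \<in> hom X Z (cprod X A B)" using fh gh by blast
  have Sp: "Sa (cpair X f g) \<in> hom X (So Z) (So (cprod X A B))" using p by blast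
  have gm: "alg_prod X So Sa A \<alpha> B \<beta> \<in> hom X (So (cprod X A B)) (cprod X A B)" using a b by blast
  have p1: "cpr1 X A B \<in> hom X (cprod X A B) A" and p2: "cpr2 X A B \<in> hom X (cprod X A B) B" using A B by blast+
  have e1: "ccomp X (cpr1 X A B) (ccomp X (alg_prod X So Sa A \<alpha> B \<beta>) (Sa (cpair X f g)))
      = ccomp X (cpr1 X A B) (ccomp X (cpair X f g) \<zeta>)"
  proof -
    have "ccomp X (cpr1 X A B) (ccomp X (alg_prod X So Sa A \<alpha> B \<beta>) (Sa (cpair X f g)))
        = ccomp X (ccomp X \<alpha> (Sa (cpr1 X A B))) (Sa (cpair X f g))"
      using assoc[OF Sp gm p1] alg_prod_pr1[OF a b] by simp
    also have "\<dots> = ccomp X \<alpha> (Sa f)" using assoc[OF Sp S_hom[OF p1] a] S_comp[OF p p1] fh gh by simp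
    also have "\<dots> = ccomp X (cpr1 X A B) (ccomp X (cpair X f g) \<zeta>)" using fe assoc[OF z p p1] fh gh by simp
    finally show ?thesis .
  qed
  have e2: "ccomp X (cpr2 X A B) (ccomp X (alg_prod X So Sa A \<alpha> B \<beta>) (Sa (cpair X f g)))
      = ccomp X (cpr2 X A B) (ccomp X (cpair X f g) \<zeta>)"
  proof -
    have "ccomp X (cpr2 X A B) (ccomp X (alg_prod X So Sa A \<alpha> B \<beta>) (Sa (cpair X f g)))
        = ccomp X (ccomp X \<beta> (Sa (cpr2 X A B))) (Sa (cpair X f g))"
      using assoc[OF Sp gm p2] alg_prod_pr2[OF a b] by simp
    also have "\<dots> = ccomp X \<beta> (Sa g)" using assoc[OF Sp S_hom[OF p2] b] S_comp[OF p p2] fh gh by simp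
    also have "\<dots> = ccomp X (cpr2 X A B) (ccomp X (cpair X f g) \<zeta>)" using ge assoc[OF z p p2] fh gh by simp
    finally show ?thesis .
  qed
  have "ccomp X (alg_prod X So Sa A \<alpha> B \<beta>) (Sa (cpair X f g)) = ccomp X (cpair X f g) \<zeta>"
    by (rule pair_ext[OF comp_hom[OF Sp gm] comp_hom[OF z p] e1 e2])
  thus ?thesis unfolding alg_mor_def using p by blast
qed

lemma term_alg: "is_alg X So Sa mu eta (cterm X) (czero X (So (cterm X)) (cterm X))"
proof -
  have T: "cterm X \<in> cObj X" by (rule term_obj)
  have ST: "So (cterm X) \<in> cObj X" using T by blast
  have z: "czero X (So (cterm X)) (cterm X) \<in> hom X (So (cterm X)) (cterm X)" using T ST by blast
  show ?thesis unfolding is_alg_def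
    using T z term_unique comp_hom[OF mu_hom[OF T] z] comp_hom[OF S_hom[OF z] z]
      comp_hom[OF eta_hom[OF T] z] id_hom[OF T] by blast
qed

lemma term_Dlin: "D_linear X (czero X (So (cterm X)) (cterm X))"
proof -
  have T: "cterm X \<in> cObj X" by (rule term_obj)
  have ST: "So (cterm X) \<in> cObj X" using T by blast
  have z: "czero X (So (cterm X)) (cterm X) \<in> hom X (So (cterm X)) (cterm X)" using T ST by blast
  have d: "cdom X (czero X (So (cterm X)) (cterm X)) = So (cterm X)" using z unfolding hom_def by simp
  show ?thesis unfolding D_linear_def d
    using term_unique D_hom[OF z] comp_hom[OF pr2_hom[OF ST ST] z] by blast
qed

lemma alg_mor_term: "is_alg X So Sa mu eta A \<alpha> \<Longrightarrow> t \<in> hom X A (cterm X) \<Longrightarrow>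
   alg_mor X Sa A \<alpha> (cterm X) (czero X (So (cterm X)) (cterm X)) t"
proof -
  assume ia: "is_alg X So Sa mu eta A \<alpha>" and t: "t \<in> hom X A (cterm X)"
  have a: "\<alpha> \<in> hom X (So A) A" using ia alg_hom by blast
  have T: "cterm X \<in> cObj X" by (rule term_obj)
  have ST: "So (cterm X) \<in> cObj X" using T by blast
  have z: "czero X (So (cterm X)) (cterm X) \<in> hom X (So (cterm X)) (cterm X)" using T ST by blast
  show ?thesis unfolding alg_mor_def using t term_unique comp_hom[OF S_hom[OF t] z] comp_hom[OF a t] by blast
qed

abbreviation "DD \<equiv> DIFF_EM X So Sa mu eta"
abbreviation "DO \<equiv> DIFF_obj X So Sa mu eta"

lemma DO_mem[simp]: "(A, \<alpha>) \<in> DO \<longleftrightarrow> is_alg X So Sa mu eta A \<alpha> \<and> D_linear X \<alpha>"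
  unfolding DIFF_obj_def by simp

lemma DD_simps[simp]:
  "cObj DD = DO"
  "cdom DD (P, Q, f) = P"
  "ccod DD (P, Q, f) = Q"
  "ccomp DD (Q, R, g) (P, Q', f) = (P, R, ccomp X g f)"
  "cid DD P = (P, P, cid X (fst P))"
  "cadd DD (P, Q, f) (P', Q', g) = (P, Q, cadd X f g)"
  "csmult DD r (P, Q, f) = (P, Q, csmult X r f)"
  "czero DD P Q = (P, Q, czero X (fst P) (fst Q))"
  "cterm DD = (cterm X, czero X (So (cterm X)) (cterm X))"
  "cprod DD P Q = (cprod X (fst P) (fst Q), alg_prod X So Sa (fst P) (snd P) (fst Q) (snd Q))"
  "cpr1 DD P Q = (cprod DD P Q, P, cpr1 X (fst P) (fst Q))"
  "cpr2 DD P Q = (cprod DD P Q, Q, cpr2 X (fst P) (fst Q))"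
  "cpair DD (P, Q, f) (P', Q', g) = (P, cprod DD Q Q', cpair X f g)"
  "cD DD (P, Q, f) = (cprod DD P P, Q, cD X f)"
  unfolding DIFF_EM_def DIFF_prod_def by simp_all

lemma DD_hom_iff: "(P', Q', f) \<in> hom DD P Q \<longleftrightarrow> P' = P \<and> Q' = Q \<and> P \<in> DO \<and> Q \<in> DO \<and>
   alg_mor X Sa (fst P) (snd P) (fst Q) (snd Q) f"
  unfolding hom_def DIFF_EM_def by auto

lemma DD_homE[elim!]: "x \<in> hom DD (A, \<alpha>) (B, \<beta>) \<Longrightarrow>
   (\<And>f. x = ((A, \<alpha>), (B, \<beta>), f) \<Longrightarrow> is_alg X So Sa mu eta A \<alpha> \<Longrightarrow> D_linear X \<alpha> \<Longrightarrow>
     is_alg X So Sa mu eta B \<beta> \<Longrightarrow> D_linear X \<beta> \<Longrightarrow> alg_mor X Sa A \<alpha> B \<beta> f \<Longrightarrow> R) \<Longrightarrow> R"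
  by (cases x) (auto simp: DD_hom_iff)

lemma DD_homI: "is_alg X So Sa mu eta A \<alpha> \<Longrightarrow> D_linear X \<alpha> \<Longrightarrow>
     is_alg X So Sa mu eta B \<beta> \<Longrightarrow> D_linear X \<beta> \<Longrightarrow> alg_mor X Sa A \<alpha> B \<beta> f \<Longrightarrow>
     ((A, \<alpha>), (B, \<beta>), f) \<in> hom DD (A, \<alpha>) (B, \<beta>)"
  by (simp add: DD_hom_iff)

lemma DD_arr: "x \<in> cArr DD \<Longrightarrow> x \<in> hom DD (cdom DD x) (ccod DD x)"
  unfolding hom_def by simp

lemma amor_hom: "alg_mor X Sa A \<alpha> B \<beta> f \<Longrightarrow> f \<in> hom X A B" unfolding alg_mor_def by blast

lemma prod_DO: "is_alg X So Sa mu eta A \<alpha> \<Longrightarrow> D_linear X \<alpha> \<Longrightarrow>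
     is_alg X So Sa mu eta B \<beta> \<Longrightarrow> D_linear X \<beta> \<Longrightarrow>
     is_alg X So Sa mu eta (cprod X A B) (alg_prod X So Sa A \<alpha> B \<beta>) \<and> D_linear X (alg_prod X So Sa A \<alpha> B \<beta>)"
  using alg_prod_is_alg alg_prod_Dlin alg_hom by blast

lemma DD_category: "category DD"
  unfolding category_def
proof (intro conjI)
  show "\<forall>f\<in>cArr DD. cdom DD f \<in> cObj DD \<and> ccod DD f \<in> cObj DD"
    unfolding DIFF_EM_def by auto
  show "\<forall>A\<in>cObj DD. cid DD A \<in> hom DD A A"
    by (auto intro!: DD_homI alg_mor_id)
  show "\<forall>A B E f g. f \<in> hom DD A B \<longrightarrow> g \<in> hom DD B E \<longrightarrow> ccomp DD g f \<in> hom DD A E"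
    by (auto intro!: DD_homI intro: alg_mor_comp)
  show "\<forall>A B E G f g h. f \<in> hom DD A B \<longrightarrow> g \<in> hom DD B E \<longrightarrow> h \<in> hom DD E G \<longrightarrow>
        ccomp DD h (ccomp DD g f) = ccomp DD (ccomp DD h g) f"
    by (auto dest!: amor_hom intro: assoc)
  show "\<forall>A B f. f \<in> hom DD A B \<longrightarrow> ccomp DD f (cid DD A) = f \<and> ccomp DD (cid DD B) f = f"
    by (auto dest!: amor_hom intro: id_l id_r)
qed

lemma DD_left_lin: "left_lin_cat DD"
  unfolding left_lin_cat_def
proof (intro conjI)
  show "category DD" by (rule DD_category)
  show "\<forall>A\<in>cObj DD. \<forall>B\<in>cObj DD. czero DD A B \<in> hom DD A B"
    by (auto intro!: DD_homI alg_mor_zero)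
  show "\<forall>A B f g. f \<in> hom DD A B \<longrightarrow> g \<in> hom DD A B \<longrightarrow> cadd DD f g \<in> hom DD A B"
    by (auto intro!: DD_homI alg_mor_add)
  show "\<forall>A B r f. f \<in> hom DD A B \<longrightarrow> csmult DD r f \<in> hom DD A B"
    by (auto intro!: DD_homI alg_mor_smult)
  show "\<forall>A B f g h. f \<in> hom DD A B \<longrightarrow> g \<in> hom DD A B \<longrightarrow> h \<in> hom DD A B \<longrightarrow>
        cadd DD (cadd DD f g) h = cadd DD f (cadd DD g h)"
    by (auto dest!: amor_hom intro: add_assoc)
  show "\<forall>A B f g. f \<in> hom DD A B \<longrightarrow> g \<in> hom DD A B \<longrightarrow> cadd DD f g = cadd DD g f"
    by (auto dest!: amor_hom intro: add_comm)
  show "\<forall>A B f. f \<in> hom DD A B \<longrightarrow> cadd DD f (czero DD A B) = f"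
    by (auto dest!: amor_hom intro: add_zero)
  show "\<forall>A B r f g. f \<in> hom DD A B \<longrightarrow> g \<in> hom DD A B \<longrightarrow>
        csmult DD r (cadd DD f g) = cadd DD (csmult DD r f) (csmult DD r g)"
    by (auto dest!: amor_hom intro: smult_add)
  show "\<forall>A B r s f. f \<in> hom DD A B \<longrightarrow> csmult DD (r + s) f = cadd DD (csmult DD r f) (csmult DD s f)"
    by (auto dest!: amor_hom intro: add_smult)
  show "\<forall>A B r s f. f \<in> hom DD A B \<longrightarrow> csmult DD (r * s) f = csmult DD r (csmult DD s f)"
    by (auto dest!: amor_hom intro: mult_smult)
  show "\<forall>A B f. f \<in> hom DD A B \<longrightarrow> csmult DD 1 f = f"
    by (auto dest!: amor_hom intro: one_smult)
  show "\<forall>A B f. f \<in> hom DD A B \<longrightarrow> csmult DD 0 f = czero DD A B"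
    by (auto dest!: amor_hom intro: zero_smult)
  show "\<forall>A\<in>cObj DD. \<forall>B\<in>cObj DD. \<forall>r. csmult DD r (czero DD A B) = czero DD A B"
    by (auto dest!: alg_obj intro: smult_zero)
  show "\<forall>Z A B x f g r s. x \<in> hom DD Z A \<longrightarrow> f \<in> hom DD A B \<longrightarrow> g \<in> hom DD A B \<longrightarrow>
        ccomp DD (cadd DD (csmult DD r f) (csmult DD s g)) x
          = cadd DD (csmult DD r (ccomp DD f x)) (csmult DD s (ccomp DD g x))"
    by (auto dest!: amor_hom intro: precomp_lin)
qed

lemma DD_cart_lin: "cart_lin_cat DD"
  unfolding cart_lin_cat_def
proof (intro conjI)
  show "left_lin_cat DD" by (rule DD_left_lin)
  show "cterm DD \<in> cObj DD" using term_alg term_Dlin by simp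
  show "\<forall>A\<in>cObj DD. \<exists>!t. t \<in> hom DD A (cterm DD)"
  proof (intro ballI)
    fix P assume "P \<in> cObj DD"
    then obtain A \<alpha> where P: "P = (A, \<alpha>)" and ia: "is_alg X So Sa mu eta A \<alpha>" and da: "D_linear X \<alpha>"
      by (cases P) auto
    have A: "A \<in> cObj X" using ia alg_obj by blast
    have t: "czero X A (cterm X) \<in> hom X A (cterm X)" using A term_obj by blast
    show "\<exists>!t. t \<in> hom DD P (cterm DD)"
    proof (rule ex1I)
      show "(P, cterm DD, czero X A (cterm X)) \<in> hom DD P (cterm DD)"
        unfolding P using DD_homI[OF ia da term_alg term_Dlin alg_mor_term[OF ia t]] by simp
      fix t' assume "t' \<in> hom DD P (cterm DD)"
      thus "t' = (P, cterm DD, czero X A (cterm X))"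
        unfolding P using t term_unique by (auto dest!: amor_hom)
    qed
  qed
  show "\<forall>A\<in>cObj DD. \<forall>B\<in>cObj DD. cprod DD A B \<in> cObj DD \<and>
        cpr1 DD A B \<in> hom DD (cprod DD A B) A \<and> cpr2 DD A B \<in> hom DD (cprod DD A B) B \<and>
        k_linear DD (cpr1 DD A B) \<and> k_linear DD (cpr2 DD A B)"
  proof (intro ballI conjI)
    fix P Q assume "P \<in> cObj DD" "Q \<in> cObj DD"
    then obtain A \<alpha> B \<beta> where P: "P = (A, \<alpha>)" and ia: "is_alg X So Sa mu eta A \<alpha>" and da: "D_linear X \<alpha>"
      and Q: "Q = (B, \<beta>)" and ib: "is_alg X So Sa mu eta B \<beta>" and db: "D_linear X \<beta>"
      by (cases P, cases Q) auto
    have A: "A \<in> cObj X" and B: "B \<in> cObj X" using ia ib alg_obj by blast+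
    note pd = prod_DO[OF ia da ib db]
    show "cprod DD P Q \<in> cObj DD" unfolding P Q using pd by simp
    show "cpr1 DD P Q \<in> hom DD (cprod DD P Q) P" unfolding P Q
      using DD_homI[OF pd[THEN conjunct1] pd[THEN conjunct2] ia da alg_mor_pr1[OF ia ib]] by simp
    show "cpr2 DD P Q \<in> hom DD (cprod DD P Q) Q" unfolding P Q
      using DD_homI[OF pd[THEN conjunct1] pd[THEN conjunct2] ib db alg_mor_pr2[OF ia ib]] by simp
    have k1: "k_linear X (cpr1 X A B)" and k2: "k_linear X (cpr2 X A B)" using pr1_klin pr2_klin A B by blast+
    have d1: "cdom X (cpr1 X A B) = cprod X A B" and d2: "cdom X (cpr2 X A B) = cprod X A B"
      using pr1_hom[OF A B] pr2_hom[OF A B] unfolding hom_def by auto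
    show "k_linear DD (cpr1 DD P Q)" unfolding k_linear_def P Q
      using k1 unfolding k_linear_def d1 by (auto dest!: amor_hom)
    show "k_linear DD (cpr2 DD P Q)" unfolding k_linear_def P Q
      using k2 unfolding k_linear_def d2 by (auto dest!: amor_hom)
  qed
  show "\<forall>Z A B f g. f \<in> hom DD Z A \<longrightarrow> g \<in> hom DD Z B \<longrightarrow>
        cpair DD f g \<in> hom DD Z (cprod DD A B) \<and>
        ccomp DD (cpr1 DD A B) (cpair DD f g) = f \<and> ccomp DD (cpr2 DD A B) (cpair DD f g) = g"
  proof (intro allI impI)
    fix Z P Q f g assume f: "f \<in> hom DD Z P" and g: "g \<in> hom DD Z Q"
    obtain C \<zeta> A \<alpha> B \<beta> where Z: "Z = (C, \<zeta>)" and P: "P = (A, \<alpha>)" and Q: "Q = (B, \<beta>)"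
      by (cases Z, cases P, cases Q) auto
    obtain f' where f': "f = (Z, P, f')" and iz: "is_alg X So Sa mu eta C \<zeta>" "D_linear X \<zeta>"
      and ia: "is_alg X So Sa mu eta A \<alpha>" "D_linear X \<alpha>" and fm: "alg_mor X Sa C \<zeta> A \<alpha> f'"
      using f unfolding Z P by blast
    obtain g' where g': "g = (Z, Q, g')" and ib: "is_alg X So Sa mu eta B \<beta>" "D_linear X \<beta>"
      and gm: "alg_mor X Sa C \<zeta> B \<beta> g'"
      using g unfolding Z Q by blast
    note pd = prod_DO[OF ia ib]
    show "cpair DD f g \<in> hom DD Z (cprod DD P Q) \<and>
        ccomp DD (cpr1 DD P Q) (cpair DD f g) = f \<and> ccomp DD (cpr2 DD P Q) (cpair DD f g) = g"
      unfolding f' g' Z P Q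
      using DD_homI[OF iz pd[THEN conjunct1] pd[THEN conjunct2] alg_mor_pair[OF fm gm iz(1) ia(1) ib(1)]]
        amor_hom[OF fm] amor_hom[OF gm] by simp
  qed
  show "\<forall>Z A B h. h \<in> hom DD Z (cprod DD A B) \<longrightarrow>
        cpair DD (ccomp DD (cpr1 DD A B) h) (ccomp DD (cpr2 DD A B) h) = h"
    by (auto dest!: amor_hom intro: pair_eta simp: DD_hom_iff)
qed

lemma DD_cart_diff: "cart_diff_cat DD"
  unfolding cart_diff_cat_def
proof (intro conjI)
  show "cart_lin_cat DD" by (rule DD_cart_lin)
  show "\<forall>A B f. f \<in> hom DD A B \<longrightarrow> cD DD f \<in> hom DD (cprod DD A A) B"
  proof (intro allI impI)
    fix P Q f assume f: "f \<in> hom DD P Q"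
    obtain A \<alpha> B \<beta> where P: "P = (A, \<alpha>)" and Q: "Q = (B, \<beta>)" by (cases P, cases Q) auto
    obtain f' where f': "f = (P, Q, f')" and ia: "is_alg X So Sa mu eta A \<alpha>" "D_linear X \<alpha>"
      and ib: "is_alg X So Sa mu eta B \<beta>" "D_linear X \<beta>" and fm: "alg_mor X Sa A \<alpha> B \<beta> f'"
      using f unfolding P Q by blast
    note pd = prod_DO[OF ia ia]
    show "cD DD f \<in> hom DD (cprod DD P P) Q" unfolding f' P Q
      using DD_homI[OF pd[THEN conjunct1] pd[THEN conjunct2] ib D_alg_mor[OF ia ib fm]] by simp
  qed
  show "\<forall>A B f g r s. f \<in> hom DD A B \<longrightarrow> g \<in> hom DD A B \<longrightarrow>
        cD DD (cadd DD (csmult DD r f) (csmult DD s g)) = cadd DD (csmult DD r (cD DD f)) (csmult DD s (cD DD g))"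
    by (auto dest!: amor_hom intro: D_lin)
  show "\<forall>A B f r s. f \<in> hom DD A B \<longrightarrow>
        (let q1 = cpr1 DD A (cprod DD A A);
             q2 = ccomp DD (cpr1 DD A A) (cpr2 DD A (cprod DD A A));
             q3 = ccomp DD (cpr2 DD A A) (cpr2 DD A (cprod DD A A))
         in ccomp DD (cD DD f) (cpair DD q1 (cadd DD (csmult DD r q2) (csmult DD s q3)))
            = cadd DD (csmult DD r (ccomp DD (cD DD f) (cpair DD q1 q2)))
                     (csmult DD s (ccomp DD (cD DD f) (cpair DD q1 q3))))"
    by (auto dest!: amor_hom intro: D2 simp: Let_def)
  show "\<forall>A\<in>cObj DD. cD DD (cid DD A) = cpr2 DD A A"
    by (auto dest!: alg_obj intro: D_id)
  show "\<forall>A\<in>cObj DD. \<forall>B\<in>cObj DD.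
        cD DD (cpr1 DD A B) = ccomp DD (cpr1 DD A B) (cpr2 DD (cprod DD A B) (cprod DD A B)) \<and>
        cD DD (cpr2 DD A B) = ccomp DD (cpr2 DD A B) (cpr2 DD (cprod DD A B) (cprod DD A B))"
    by (auto dest!: alg_obj intro: D_pr1 D_pr2)
  show "\<forall>Z A B f g. f \<in> hom DD Z A \<longrightarrow> g \<in> hom DD Z B \<longrightarrow>
        cD DD (cpair DD f g) = cpair DD (cD DD f) (cD DD g)"
    by (auto dest!: amor_hom intro: D_pair)
  show "\<forall>A B E f g. f \<in> hom DD A B \<longrightarrow> g \<in> hom DD B E \<longrightarrow>
        cD DD (ccomp DD g f) = ccomp DD (cD DD g) (cpair DD (ccomp DD f (cpr1 DD A A)) (cD DD f))"
    by (auto dest!: amor_hom intro: D_comp)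
  show "\<forall>A B f. f \<in> hom DD A B \<longrightarrow>
        ccomp DD (cD DD (cD DD f))
          (cpair DD (cpair DD (cpr1 DD A A) (czero DD (cprod DD A A) A))
                   (cpair DD (czero DD (cprod DD A A) A) (cpr2 DD A A))) = cD DD f"
    by (auto dest!: amor_hom intro: D6)
  show "\<forall>A B f. f \<in> hom DD A B \<longrightarrow>
        (let AA = cprod DD A A;
             p1 = ccomp DD (cpr1 DD A A) (cpr1 DD AA AA);
             p2 = ccomp DD (cpr2 DD A A) (cpr1 DD AA AA);
             p3 = ccomp DD (cpr1 DD A A) (cpr2 DD AA AA);
             p4 = ccomp DD (cpr2 DD A A) (cpr2 DD AA AA)
         in ccomp DD (cD DD (cD DD f)) (cpair DD (cpair DD p1 p2) (cpair DD p3 p4))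
            = ccomp DD (cD DD (cD DD f)) (cpair DD (cpair DD p1 p3) (cpair DD p2 p4)))"
    by (auto dest!: amor_hom intro: D7 simp: Let_def)
qed

lemma forget_simp[simp]: "forget_arr (P, Q, f) = f" unfolding forget_arr_def by simp

lemma DD_functor: "strict_cart_diff_functor DD X fst forget_arr"
  unfolding strict_cart_diff_functor_def strict_cart_lin_functor_def strong_cart_lin_functor_def
proof (intro conjI)
  show "cfunctor DD X fst forget_arr"
    unfolding cfunctor_def by (auto dest: alg_obj amor_hom)
  show "\<forall>t. t \<in> hom X (fst (cterm DD)) (cterm X) \<longrightarrow> iso X t"
    using term_unique id_hom[OF term_obj] id_iso[OF term_obj] by auto
  show "\<forall>A\<in>cObj DD. \<forall>B\<in>cObj DD. iso X (omega DD X fst forget_arr A B)"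
    unfolding omega_def by (auto dest!: alg_obj simp: pair_id intro!: id_iso prod_obj)
  show "\<forall>A B f g r s. f \<in> hom DD A B \<longrightarrow> g \<in> hom DD A B \<longrightarrow>
        forget_arr (cadd DD (csmult DD r f) (csmult DD s g)) = cadd X (csmult X r (forget_arr f)) (csmult X s (forget_arr g))"
    by auto
  show "fst (cterm DD) = cterm X" by simp
  show "\<forall>A\<in>cObj DD. \<forall>B\<in>cObj DD. omega DD X fst forget_arr A B = cid X (fst (cprod DD A B))"
    unfolding omega_def by (auto dest!: alg_obj simp: pair_id)
  show "\<forall>A B f. f \<in> hom DD A B \<longrightarrow> cD X (forget_arr f) = forget_arr (cD DD f)"
    by auto
qed

end
end

theorem mainTheorem11:
  fixes X :: "('o, 'a, 'k::comm_semiring_1) cdc"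
    and So :: "'o \<Rightarrow> 'o" and Sa :: "'a \<Rightarrow> 'a" and mu eta :: "'o \<Rightarrow> 'a"
  assumes "cart_diff_cat X"
    and "cart_diff_monad X So Sa mu eta"
  shows "cart_diff_cat (DIFF_EM X So Sa mu eta)
       \<and> strict_cart_diff_functor (DIFF_EM X So Sa mu eta) X fst forget_arr
       \<and> (\<forall>A \<alpha> B \<beta> f. is_alg X So Sa mu eta A \<alpha> \<longrightarrow> D_linear X \<alpha> \<longrightarrow>
            is_alg X So Sa mu eta B \<beta> \<longrightarrow> D_linear X \<beta> \<longrightarrow>
            alg_mor X Sa A \<alpha> B \<beta> f \<longrightarrow>
            alg_mor X Sa (cprod X A A) (alg_prod X So Sa A \<alpha> A \<alpha>) B \<beta> (cD X f))"
    using DD_cart_diff[OF assms(1) assms(2)] DD_functor[OF assms(1) assms(2)] D_alg_mor[OF assms(1) assms(2)]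
  by blast


end
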